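(* For $k\in\{1,\dots,8\}$, the classes $(d,e;m)\in\mathcal{E}$ with $d\geq e$, $l(m)=l(6+\frac1k)$ and $\mu(d,e;m)(6+\frac1k)>\sqrt{(6+\frac1k)/2}$ are exactly the following: for $k=7$: $(28,28;16^{\times6},3,2^{\times6})$ and $(196,196;112^{\times5},111,16^{\times7})$; for $k=6$: $(14,14;8^{\times6},2,1^{\times5})$ and $(84,84;48^{\times5},47,8^{\times6})$; for $k=5$: $(11,10;6^{\times6},1^{\times5})$; for $k=4$: $(28,28;16^{\times5},15,4^{\times4})$; for $k=3$: $(7,7;4^{\times6},1^{\times3})$; for $k=2$: $(9,9;5^{\times6},3,2)$; for $k=1$: $(4,4;3,2^{\times6})$; for $k=8$: none.
   Context: $x^{\times l}$ denotes $x$ repeated $l$ times. Weight expansion: for rational $a\geq1$ with continued fraction $[l_0;l_1,\dots,l_N]$ ($l_N\geq2$ if $N\geq1$), $w(a)=(1^{\times l_0},x_1^{\times l_1},\dots,x_N^{\times l_N})$ with $x_0=1$, $x_1=a-l_0$, $x_i=x_{i-2}-l_{i-1}x_{i-1}$ (e.g. $w(6+\frac1k)=(1^{\times6},(\frac1k)^{\times k})$). $l(a)$ is the length of $w(a)$ and $l(m)$ the number of positive entries of $m$. The set $\mathcal{E}$: a Cremona transform of an integer tuple $(\delta;n_1,\dots,n_k)$ with $n_1\geq\dots\geq n_k$ is $(2\delta-n_1-n_2-n_3;\delta-n_2-n_3,\delta-n_1-n_3,\delta-n_1-n_2,n_4,\dots,n_k)$; a Cremona move is a Cremona transform followed by a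 permutation of the entries after the semicolon. $\mathcal{E}$ consists of $(0,0;-1)$ together with all integer tuples $(d,e;m_1,\dots,m_M)$ with $d,e\geq0$, $m_1\geq\dots\geq m_M\geq0$, satisfying $\sum m_i=2(d+e)-1$, $\sum m_i^2=2de+1$, and such that $(d+e-m_1;d-m_1,e-m_1,m_2,\dots,m_M)$ reduces to $(0;-1,0,\dots,0)$ by repeated Cremona moves. $\mu(d,e;m)(a):=\langle m,w(a)\rangle/(d+e)$, the Euclidean scalar product after padding with zeros. *)

theory Defs
  imports Complex_Main "HOL-Library.Multiset"
begin

text \<open>Continued fraction of a rational a, computed with a fuel argument.
  With fuel equal to the denominator of a the expansion is complete
  (the denominator strictly decreases in each step).\<close>
fun cf_fuel :: "nat \<Rightarrow> rat \<Rightarrow> int list" where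
  "cf_fuel 0 a = []"
| "cf_fuel (Suc n) a =
     \<lfloor>a\<rfloor> # (if a = of_int \<lfloor>a\<rfloor> then [] else cf_fuel n (1 / (a - of_int \<lfloor>a\<rfloor>)))"

definition cf :: "rat \<Rightarrow> int list" where
  "cf a = cf_fuel (nat (snd (quotient_of a))) a"

fun wx :: "rat \<Rightarrow> int list \<Rightarrow> nat \<Rightarrow> rat" where
  "wx a ls 0 = 1"
| "wx a ls (Suc 0) = a - of_int (ls ! 0)"
| "wx a ls (Suc (Suc i)) = wx a ls i - of_int (ls ! Suc i) * wx a ls (Suc i)"

definition wexp :: "rat \<Rightarrow> rat list" where
  "wexp a = (let ls = cf a in
     concat (map (\<lambda>i. replicate (nat (ls ! i)) (wx a ls i)) [0..<length ls]))"

definition l_a :: "rat \<Rightarrow> nat" where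
  "l_a a = length (wexp a)"

definition l_m :: "int list \<Rightarrow> nat" where
  "l_m m = length (filter (\<lambda>x. x > 0) m)"

text \<open>Euclidean scalar product after padding with zeros (zip truncation is the same).\<close>
definition mu :: "int \<times> int \<times> int list \<Rightarrow> rat \<Rightarrow> rat" where
  "mu c a = (case c of (d, e, m) \<Rightarrow>
     sum_list (map (\<lambda>(x, y). of_int x * y) (zip m (wexp a))) / of_int (d + e))"

fun cremona_transform :: "int \<Rightarrow> int list \<Rightarrow> int \<times> int list" where
  "cremona_transform \<delta> (n1 # n2 # n3 # r) =
     (2*\<delta> - n1 - n2 - n3, (\<delta> - n2 - n3) # (\<delta> - n1 - n3) # (\<delta> - n1 - n2) # r)"
| "cremona_transform \<delta> ns = (\<delta>, ns)"

definition cremona_move :: "int \<times> int list \<Rightarrow> int \<times> int list \<Rightarrow> bool" where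
  "cremona_move t t' \<longleftrightarrow> length (snd t) \<ge> 3 \<and>
     (\<exists>ns. mset ns = mset (snd t) \<and> sorted_wrt (\<ge>) ns \<and>
        fst t' = fst (cremona_transform (fst t) ns) \<and>
        mset (snd t') = mset (snd (cremona_transform (fst t) ns)))"

definition E :: "(int \<times> int \<times> int list) set" where
  "E = {(0, 0, [-1])} \<union>
     {(d, e, m). d \<ge> 0 \<and> e \<ge> 0 \<and> m \<noteq> [] \<and> sorted_wrt (\<ge>) m \<and> (\<forall>x\<in>set m. x \<ge> 0) \<and>
        sum_list m = 2 * (d + e) - 1 \<and>
        sum_list (map (\<lambda>x. x^2) m) = 2 * d * e + 1 \<and>
        cremona_move\<^sup>*\<^sup>* (d + e - hd m, (d - hd m) # (e - hd m) # tl m)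
                         (0, (-1) # replicate (length m) 0)}"

definition good_classes :: "nat \<Rightarrow> (int \<times> int \<times> int list) set" where
  "good_classes k = (let a = 6 + 1 / (of_nat k :: rat) in
     {(d, e, filter (\<lambda>x. x > 0) m) | d e m. (d, e, m) \<in> E \<and> d \<ge> e \<and>
        l_m m = l_a a \<and> real_of_rat (mu (d, e, m) a) > sqrt (real_of_rat a / 2)})"

end

theory Submission
  imports Defs
begin


lemma sorted_desc_unique:
  fixes xs ys :: "int list"
  assumes "mset xs = mset ys" "sorted_wrt (\<ge>) xs" "sorted_wrt (\<ge>) ys"
  shows "xs = ys"
proof -
  have s1: "sorted (rev xs)" "sorted (rev ys)" using assms(2,3) by (simp_all add: sorted_wrt_rev)
  have "sort (rev ys) = rev xs" by (rule properties_for_sort) (use assms(1) s1 in simp_all)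
  moreover have "sort (rev ys) = rev ys" using s1 by (simp add: sorted_sort_id)
  ultimately show ?thesis by simp
qed

lemma quot_6k:
  assumes "k \<ge> 1"
  shows "quotient_of (6 + 1 / of_nat k :: rat) = (6 * int k + 1, int k)"
proof -
  have e: "(6 + 1 / of_nat k :: rat) = Fract (6 * int k + 1) (int k)"
    using assms by (simp add: Fract_of_int_quotient field_simps)
  have "coprime (6 * int k + 1) (int k)"
  proof (rule coprimeI)
    fix c assume a: "c dvd 6 * int k + 1" "c dvd int k"
    then have "c dvd 6 * int k" by simp
    with a(1) show "is_unit c" by (simp add: dvd_add_right_iff)
  qed
  show ?thesis unfolding e quotient_of_Fract
    using assms \<open>coprime _ _\<close> by (simp add: normalize_def)
qed

lemma floor_6k: "k \<ge> 2 \<Longrightarrow> \<lfloor>6 + 1 / of_nat k :: rat\<rfloor> = 6"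
  by (rule floor_unique) (simp_all add: field_simps)

lemma cf_6k:
  assumes "k \<ge> 1"
  shows "cf (6 + 1 / of_nat k) = (if k = 1 then [7] else [6, int k])"
proof (cases "k = 1")
  case True
  then show ?thesis by (simp add: cf_def quot_6k)
next
  case False
  then obtain j where j: "k = Suc (Suc j)" using assms by (cases k; cases "k - 1") auto
  define a where "a = (6 + 1 / of_nat k :: rat)"
  have f: "\<lfloor>a\<rfloor> = 6" unfolding a_def using j by (intro floor_6k) simp
  have ne: "a \<noteq> of_int 6" using j a_def by simp
  have inv: "1 / (a - of_int 6) = of_int (int k)" by (simp add: a_def)
  have "cf a = cf_fuel k a"
    using assms by (simp add: cf_def quot_6k a_def)
  also have "\<dots> = [6, int k]"
    unfolding j cf_fuel.simps f inv using ne by (simp add: j)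
  finally show ?thesis using False by (simp add: a_def)
qed

lemma wexp_6k:
  assumes "k \<ge> 1"
  shows "wexp (6 + 1 / of_nat k) = replicate 6 1 @ replicate k (1 / of_nat k)"
proof (cases "k = 1")
  case True
  have c: "cf 7 = [7]" using cf_6k[of 1] by simp
  show ?thesis using True by (simp add: wexp_def c numeral_eq_Suc)
next
  case False
  then show ?thesis using assms
    by (simp add: wexp_def cf_6k upt_conv_Cons)
qed




lemma split_zeros:
  fixes m :: "int list"
  assumes "sorted_wrt (\<ge>) m" "\<forall>x\<in>set m. x \<ge> 0"
  shows "m = filter (\<lambda>x. x > 0) m @ replicate (length m - length (filter (\<lambda>x. x > 0) m)) 0"
  using assms
proof (induction m)
  case Nil
  then show ?case by simp
next
  case (Cons x m)
  show ?case
  proof (cases "x > 0")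
    case True
    then show ?thesis using Cons by simp
  next
    case False
    then have x0: "x = 0" using Cons.prems by auto
    have "\<forall>y\<in>set m. y = 0" using Cons.prems x0 by fastforce
    then have "filter (\<lambda>x. x > 0) m = []" by (auto simp: filter_empty_conv)
    moreover have "m = replicate (length m) 0" using \<open>\<forall>y\<in>set m. y = 0\<close>
      by (simp add: replicate_length_same)
    ultimately show ?thesis using x0 by simp
  qed
qed

lemma dot_rep:
  fixes xs :: "int list" and c :: rat
  shows "length xs = n \<Longrightarrow> sum_list (map (\<lambda>(x, y). of_int x * y) (zip xs (replicate n c))) = c * of_int (sum_list xs)"
proof (induction xs arbitrary: n)
  case Nil
  then show ?case by simp
next
  case (Cons a xs)
  then obtain n' where "n = Suc n'" by (cases n) auto
  with Cons show ?case by (simp add: algebra_simps)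
qed

lemma sum_sq_shift:
  fixes xs :: "real list"
  shows "sum_list (map (\<lambda>x. (x - \<mu>)^2) xs) = sum_list (map (\<lambda>x. x^2) xs) - 2 * \<mu> * sum_list xs + real (length xs) * \<mu>^2"
  by (induction xs) (simp_all add: algebra_simps power2_eq_square)

lemma variance_real:
  fixes xs :: "real list"
  assumes "xs \<noteq> []"
  shows "2 * (real (length xs) * sum_list (map (\<lambda>x. x^2) xs) - (sum_list xs)^2) \<ge> real (length xs) * (hd xs - last xs)^2"
proof -
  define n where "n = real (length xs)"
  define \<mu> where "\<mu> = sum_list xs / n"
  have n0: "n > 0" using assms by (simp add: n_def)
  have lb: "sum_list (map (\<lambda>x. (x - \<mu>)^2) xs) \<ge> (hd xs - last xs)^2 / 2"
  proof (cases "length xs = 1")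
    case True
    then obtain a where "xs = [a]" by (cases xs) auto
    then show ?thesis by simp
  next
    case False
    with assms obtain a ys where xs: "xs = a # ys" and "ys \<noteq> []" by (cases xs) auto
    then obtain mid b where ys: "ys = mid @ [b]" by (cases ys rule: rev_cases) auto
    have "sum_list (map (\<lambda>x. (x - \<mu>)^2) xs) = (a - \<mu>)^2 + sum_list (map (\<lambda>x. (x - \<mu>)^2) mid) + (b - \<mu>)^2"
      by (simp add: xs ys)
    moreover have "sum_list (map (\<lambda>x. (x - \<mu>)^2) mid) \<ge> 0" by (rule sum_list_nonneg) auto
    moreover have "(a - \<mu>)^2 + (b - \<mu>)^2 \<ge> (a - b)^2 / 2"
    proof -
      have "(a - \<mu>)^2 + (b - \<mu>)^2 - (a - b)^2 / 2 = 2 * ((a + b) / 2 - \<mu>)^2"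
        by (simp add: power2_eq_square field_simps)
      moreover have "2 * ((a + b) / 2 - \<mu>)^2 \<ge> 0" by simp
      ultimately show ?thesis by linarith
    qed
    ultimately show ?thesis by (simp add: xs ys)
  qed
  have "sum_list (map (\<lambda>x. (x - \<mu>)^2) xs) = sum_list (map (\<lambda>x. x^2) xs) - (sum_list xs)^2 / n"
    unfolding sum_sq_shift n_def[symmetric] using n0
    by (simp add: \<mu>_def field_simps power2_eq_square)
  with lb have L: "sum_list (map (\<lambda>x. x^2) xs) - (sum_list xs)^2 / n \<ge> (hd xs - last xs)^2 / 2" by simp
  have "n * (sum_list (map (\<lambda>x. x^2) xs) - (sum_list xs)^2 / n) = n * sum_list (map (\<lambda>x. x^2) xs) - (sum_list xs)^2"
    using n0 by (simp add: right_diff_distrib)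
  moreover have "n * (sum_list (map (\<lambda>x. x^2) xs) - (sum_list xs)^2 / n) \<ge> n * ((hd xs - last xs)^2 / 2)"
    using n0 L by (intro mult_left_mono) auto
  ultimately have "n * sum_list (map (\<lambda>x. x^2) xs) - (sum_list xs)^2 \<ge> n * (hd xs - last xs)^2 / 2" by simp
  then show ?thesis unfolding n_def[symmetric] by (simp add: field_simps)
qed

lemma of_int_sum_map:
  "real_of_int (sum_list (map f xs)) = sum_list (map (\<lambda>x. real_of_int (f x)) xs)"
  by (induction xs) simp_all

lemma variance_int:
  fixes xs :: "int list"
  assumes "xs \<noteq> []"
  shows "2 * (int (length xs) * sum_list (map (\<lambda>x. x^2) xs) - (sum_list xs)^2) \<ge> int (length xs) * (hd xs - last xs)^2"
proof -
  have "2 * (real (length (map real_of_int xs)) * sum_list (map (\<lambda>x. x^2) (map real_of_int xs)) - (sum_list (map real_of_int xs))^2) \<ge> real (length (map real_of_int xs)) * (hd (map real_of_int xs) - last (map real_of_int xs))^2"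
    by (rule variance_real) (use assms in simp)
  then have "real_of_int (2 * (int (length xs) * sum_list (map (\<lambda>x. x^2) xs) - (sum_list xs)^2)) \<ge> real_of_int (int (length xs) * (hd xs - last xs)^2)"
    using assms by (simp add: of_int_sum_map comp_def hd_map last_map sum_list_of_int)
  then show ?thesis by linarith
qed

lemma two_values:
  fixes xs :: "int list"
  assumes "sorted_wrt (\<ge>) xs" "xs \<noteq> []" "hd xs \<le> last xs + 1"
  shows "\<exists>p < length xs. xs = replicate p (last xs + 1) @ replicate (length xs - p) (last xs)"
  using assms
proof (induction xs)
  case Nil
  then show ?case by simp
next
  case (Cons x xs)
  show ?case
  proof (cases "xs = []")
    case True
    then show ?thesis by simp
  next
    case False
    have lx: "last (x # xs) = last xs" using False by simp
    have hx: "hd xs \<le> x" using Cons.prems(1) False by (cases xs) auto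
    have lle: "last xs \<le> hd xs" using Cons.prems(1) False
      by (metis last_in_set list.sel(1) sorted_wrt.simps(2) list.exhaust order_refl set_ConsD)
    have hx2: "hd xs \<le> last xs + 1" using Cons.prems(3) hx lx by simp
    from Cons.IH[OF _ False hx2] Cons.prems(1) obtain p where p: "p < length xs"
      "xs = replicate p (last xs + 1) @ replicate (length xs - p) (last xs)" by auto
    have "x \<ge> last xs" using hx lle by simp
    then have "x = last xs \<or> x = last xs + 1" using Cons.prems(3) lx by auto
    then show ?thesis
    proof
      assume xe: "x = last xs"
      have "p = 0"
      proof (rule ccontr)
        assume "p \<noteq> 0"
        then have "hd xs = last xs + 1" using p(2) by (metis hd_append hd_replicate replicate_empty)
        then show False using hx xe by simp
      qed
      then have xr: "xs = replicate (length xs) (last xs)" using p(2) by simp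
      have r: "replicate (Suc (length xs)) (last xs) = last xs # xs" using xr by (metis replicate_Suc)
      show ?thesis using xe lx r by (intro exI[of _ 0]) simp
    next
      assume xe: "x = last xs + 1"
      then show ?thesis using p lx by (intro exI[of _ "Suc p"]) simp
    qed
  qed
qed




definition Fp :: "int \<Rightarrow> int \<Rightarrow> int \<Rightarrow> int \<Rightarrow> int \<Rightarrow> int \<Rightarrow> int" where
  "Fp K p r t \<delta> N = K*(8-K)*N^2 + (12*K*t + 2*p*K + 16*r - 14*K*r - 14*K)*N
      + (48*t^2 + 16*p*t + 8*p + 8*r - (6*t+p+r+1)^2 + 4*\<delta>^2 - 8)"

definition Gp :: "int \<Rightarrow> int \<Rightarrow> int \<Rightarrow> int \<Rightarrow> int \<Rightarrow> int" where
  "Gp K p r t \<delta> = 2*K*(6*K+1)*(p*(6-p)) + 12*(6*K+1)*(r*(K-r)) + 2*K*(6*t+p-6*r)^2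
      - 12*K*(6*K+1) + 6*K*(6*K+1)*\<delta>^2"

lemma sq_lt2: "(x::int) \<ge> 0 \<Longrightarrow> x^2 < 2 \<Longrightarrow> x \<le> 1"
proof (rule ccontr)
  assume "x \<ge> 0" "x^2 < 2" "\<not> x \<le> 1"
  then have "x \<ge> 2" by simp
  then have "x^2 \<ge> 2^2" by (intro power_mono) auto
  with \<open>x^2 < 2\<close> show False by simp
qed

lemma E_data:
  assumes "(d,e,m) \<in> E" "m \<noteq> [-1]"
  shows "d \<ge> 0 \<and> e \<ge> 0 \<and> sorted_wrt (\<ge>) m \<and> (\<forall>x\<in>set m. x \<ge> 0) \<and>
     sum_list m = 2 * (d + e) - 1 \<and> sum_list (map (\<lambda>x. x^2) m) = 2 * d * e + 1"
  using assms by (auto simp: E_def)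

lemma classify:
  fixes d e :: int and m :: "int list" and k :: nat
  defines "a \<equiv> 6 + 1 / of_nat k :: rat"
  assumes k: "k \<ge> 1" and E: "(d,e,m) \<in> E" and de: "e \<le> d" and lm: "l_m m = l_a a"
    and mu: "sqrt (real_of_rat a / 2) < real_of_rat (mu (d,e,m) a)"
  shows "\<exists>c N t p r z. m = (replicate p (c+1) @ replicate (6-p) c @ replicate r (N+1) @ replicate (k-r) N) @ replicate z 0
     \<and> p \<le> 5 \<and> r < k \<and> N \<ge> 1 \<and> N \<le> c \<and> d - e \<le> 1 \<and> c = int k * N + t
     \<and> 2*(d+e) = 7*int k*N + 6*t + int p + int r + 1
     \<and> Fp (int k) (int p) (int r) t (d-e) N = 0 \<and> Gp (int k) (int p) (int r) t (d-e) < 0"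
proof -
  define P where "P = filter (\<lambda>x. x > 0) m"
  have wx: "wexp a = replicate 6 1 @ replicate k (1 / of_nat k)" using wexp_6k[OF k] by (simp add: a_def)
  have la: "l_a a = 6 + k" by (simp add: l_a_def wx)
  have lP: "length P = 6 + k" using lm la by (simp add: l_m_def P_def)
  have "m \<noteq> [-1]" using lP by (auto simp: P_def)
  with E_data[OF E] have d0: "d \<ge> 0" and e0: "e \<ge> 0" and sm: "sorted_wrt (\<ge>) m"
    and nn: "\<forall>x\<in>set m. x \<ge> 0" and sum: "sum_list m = 2 * (d + e) - 1"
    and sq: "sum_list (map (\<lambda>x. x^2) m) = 2 * d * e + 1" by auto
  define z where "z = length m - length P"
  have mz: "m = P @ replicate z 0" unfolding P_def z_def by (rule split_zeros[OF sm nn])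
  have sP: "sorted_wrt (\<ge>) P" unfolding P_def by (rule sorted_wrt_filter[OF sm])
  have posP: "\<forall>x\<in>set P. x > 0" by (simp add: P_def)
  define T where "T = take 6 P"
  define U where "U = drop 6 P"
  have PTU: "P = T @ U" by (simp add: T_def U_def)
  have lT: "length T = 6" and lU: "length U = k" using lP by (simp_all add: T_def U_def)
  have sT: "sorted_wrt (\<ge>) T" and sU: "sorted_wrt (\<ge>) U" using sP PTU by (metis sorted_wrt_append)+
  define K where "K = int k"
  have K1: "K \<ge> 1" using k by (simp add: K_def)
  define A where "A = sum_list T"
  define B where "B = sum_list U"
  define Q1 where "Q1 = sum_list (map (\<lambda>x. x^2) T)"
  define Q2 where "Q2 = sum_list (map (\<lambda>x. x^2) U)"
  have sumAB: "A + B = 2 * (d + e) - 1" using sum by (simp add: mz PTU A_def B_def sum_list_replicate)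
  have sqQ: "Q1 + Q2 = 2 * d * e + 1" using sq by (simp add: mz PTU Q1_def Q2_def sum_list_replicate)
  have s1: "d + e \<ge> 1"
  proof -
    have "sum_list m \<ge> 0" using nn by (intro sum_list_nonneg) auto
    then show ?thesis using sum by simp
  qed
  have muv: "mu (d,e,m) a = (of_int A + of_int B / of_nat k) / of_int (d+e)"
  proof -
    have "zip m (wexp a) = zip P (wexp a)"
      using lP unfolding mz wx by (simp add: zip_append1)
    also have "\<dots> = zip T (replicate 6 1) @ zip U (replicate k (1 / of_nat k))"
      unfolding PTU wx using lT by (simp add: zip_append)
    finally have "zip m (wexp a) = zip T (replicate 6 1) @ zip U (replicate k (1 / of_nat k))" .
    then show ?thesis
      unfolding mu_def using dot_rep[OF lT, of 1] dot_rep[OF lU, of "1 / of_nat k"]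
      by (simp add: A_def B_def)
  qed
  define kk where "kk = real k"
  have kk0: "kk > 0" using k by (simp add: kk_def)
  define S where "S = real_of_int (d + e)"
  have S0: "S > 0" using s1 by (simp add: S_def)
  have ra: "real_of_rat a = 6 + 1 / kk" by (simp add: a_def kk_def of_rat_add of_rat_divide)
  have rmu: "real_of_rat (mu (d,e,m) a) = (real_of_int A + real_of_int B / kk) / S"
    by (simp add: muv S_def kk_def of_rat_add of_rat_divide)
  have "(6 + 1 / kk) / 2 < ((real_of_int A + real_of_int B / kk) / S)^2"
  proof -
    have x0: "(6 + 1 / kk) / 2 \<ge> 0" using kk0 by simp
    have "sqrt ((6 + 1 / kk) / 2) < (real_of_int A + real_of_int B / kk) / S" using mu ra rmu by simp
    then have "(sqrt ((6 + 1 / kk) / 2))^2 < ((real_of_int A + real_of_int B / kk) / S)^2"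
      using kk0 by (intro power_strict_mono) auto
    then show ?thesis using x0 by simp
  qed
  then have "kk * (6 * kk + 1) * S^2 < 2 * (kk * real_of_int A + real_of_int B)^2"
  proof -
    assume H: "(6 + 1 / kk) / 2 < ((real_of_int A + real_of_int B / kk) / S)^2"
    define X where "X = kk * real_of_int A + real_of_int B"
    have e1: "((real_of_int A + real_of_int B / kk) / S)^2 = X^2 / (kk^2 * S^2)"
      using kk0 S0 by (simp add: X_def field_simps power2_eq_square)
    have e2: "(6 + 1 / kk) / 2 = (6 * kk + 1) / (2 * kk)" using kk0 by (simp add: field_simps)
    have pos: "2 * kk^2 * S^2 > 0" using kk0 S0 by simp
    have "(6 * kk + 1) / (2 * kk) * (2 * kk^2 * S^2) < X^2 / (kk^2 * S^2) * (2 * kk^2 * S^2)"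
      using H e1 e2 pos by (intro mult_strict_right_mono) simp_all
    moreover have "(6 * kk + 1) / (2 * kk) * (2 * kk^2 * S^2) = kk * (6 * kk + 1) * S^2"
      using kk0 by (simp add: field_simps power2_eq_square)
    moreover have "X^2 / (kk^2 * S^2) * (2 * kk^2 * S^2) = 2 * X^2"
      using kk0 S0 by (simp add: field_simps)
    ultimately show ?thesis by (simp add: X_def)
  qed
  then have "real_of_int (K * (6 * K + 1) * (d+e)^2) < real_of_int (2 * (K * A + B)^2)"
    by (simp add: K_def kk_def S_def)
  then have muI: "K * (6 * K + 1) * (d+e)^2 < 2 * (K * A + B)^2" by linarith
  define W where "W = K * (6 * K + 1)"
  have W0: "W > 0" using K1 by (simp add: W_def)
  have muW: "W * (d+e)^2 < 2 * (K * A + B)^2" using muI by (simp add: W_def)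
  have id1: "2*W*(6*Q1 - A^2) + 12*(6*K+1)*(K*Q2 - B^2) + 2*K*(A - 6*B)^2 = 12*W*(Q1+Q2) - 12*(K*A+B)^2"
    by (simp add: W_def power2_eq_square algebra_simps)
  have id2: "12*W*(Q1+Q2) = 12*W*(2*d*e+1)" using sqQ by simp
  have id3: "12*W*(2*d*e+1) - 6*W*(d+e)^2 = 12*W - 6*W*(d-e)^2"
    by (simp add: power2_eq_square algebra_simps)
  have G0: "2*W*(6*Q1 - A^2) + 12*(6*K+1)*(K*Q2 - B^2) + 2*K*(A - 6*B)^2 < 12*W - 6*W*(d-e)^2"
    using id1 id2 id3 muW by linarith
  have TnN: "T \<noteq> []" and UnN: "U \<noteq> []" using lT lU k by auto
  have vT: "2 * (6 * Q1 - A^2) \<ge> 6 * (hd T - last T)^2"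
    using variance_int[OF TnN] lT by (simp add: Q1_def A_def)
  have vU: "2 * (K * Q2 - B^2) \<ge> K * (hd U - last U)^2"
    using variance_int[OF UnN] lU by (simp add: Q2_def B_def K_def)
  have X1: "6 * Q1 - A^2 \<ge> 0"
  proof -
    have "0 \<le> 6 * (hd T - last T)^2" by simp
    then have "0 \<le> 2 * (6 * Q1 - A^2)" using vT by (rule order_trans)
    then show ?thesis by simp
  qed
  have X2: "K * Q2 - B^2 \<ge> 0"
  proof -
    have "0 \<le> K * (hd U - last U)^2" using K1 by simp
    then have "0 \<le> 2 * (K * Q2 - B^2)" using vU by (rule order_trans)
    then show ?thesis by simp
  qed
  have t3: "2*K*(A - 6*B)^2 \<ge> 0" using K1 by simp
  have t4: "6*W*(d-e)^2 \<ge> 0" using W0 by simp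
  have t1: "12*(6*K+1)*(K*Q2 - B^2) \<ge> 0" using X2 K1 by simp
  have t2: "2*W*(6*Q1 - A^2) \<ge> 0" using X1 W0 by simp
  have "W * (6 * (hd T - last T)^2) \<le> W * (2 * (6 * Q1 - A^2))"
    using vT W0 by (intro mult_left_mono) auto
  then have "W * (6 * (hd T - last T)^2) < W * 12" using G0 t1 t3 t4 by (simp add: algebra_simps)
  then have "(hd T - last T)^2 < 2" using W0 by simp
  moreover have "hd T \<ge> last T" using sT TnN
    by (metis hd_Cons_tl last_in_set list.set_sel(1) set_ConsD sorted_wrt.simps(2) order_refl)
  ultimately have hT: "hd T \<le> last T + 1" using sq_lt2[of "hd T - last T"] by simp
  have "(6*K+1) * (6 * (K * (hd U - last U)^2)) \<le> (6*K+1) * (12 * (K * Q2 - B^2))"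
    using vU K1 by (intro mult_left_mono) auto
  then have "W * (6 * (hd U - last U)^2) < W * 12" using G0 t2 t3 t4 by (simp add: W_def algebra_simps)
  then have "(hd U - last U)^2 < 2" using W0 by simp
  moreover have "hd U \<ge> last U" using sU UnN
    by (metis hd_Cons_tl last_in_set list.set_sel(1) set_ConsD sorted_wrt.simps(2) order_refl)
  ultimately have hU: "hd U \<le> last U + 1" using sq_lt2[of "hd U - last U"] by simp
  have "W * (6 * (d-e)^2) < W * 12" using G0 t1 t2 t3 by (simp add: algebra_simps)
  then have "(d-e)^2 < 2" using W0 by simp
  then have del: "d - e \<le> 1" using sq_lt2[of "d-e"] de by simp
  obtain p where p: "p < 6" "T = replicate p (last T + 1) @ replicate (6 - p) (last T)"
    using two_values[OF sT TnN hT] lT by auto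
  obtain r where r: "r < k" "U = replicate r (last U + 1) @ replicate (k - r) (last U)"
    using two_values[OF sU UnN hU] lU by auto
  define c where "c = last T"
  define N where "N = last U"
  have "N \<in> set P" using UnN unfolding N_def PTU by simp
  then have N1: "N \<ge> 1" using posP by fastforce
  define ip where "ip = int p"
  define ir where "ir = int r"
  have ip6: "int (6 - p) = 6 - ip" using p by (simp add: ip_def)
  have irk: "int (k - r) = K - ir" using r by (simp add: ir_def K_def)
  have eA: "A = 6 * c + ip" unfolding A_def using p(1)
    by (subst p(2)) (simp add: ip6 c_def[symmetric] ip_def sum_list_replicate algebra_simps)
  have eQ1: "Q1 = ip * (c+1)^2 + (6 - ip) * c^2" unfolding Q1_def
    by (subst p(2)) (simp add: ip6 c_def[symmetric] ip_def sum_list_replicate algebra_simps)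
  have eB: "B = K * N + ir" unfolding B_def
    by (subst r(2)) (simp add: irk N_def[symmetric] ir_def sum_list_replicate algebra_simps)
  have eQ2: "Q2 = ir * (N+1)^2 + (K - ir) * N^2" unfolding Q2_def
    by (subst r(2)) (simp add: irk N_def[symmetric] ir_def sum_list_replicate algebra_simps)
  define t where "t = c - K * N"
  have ct: "c = K * N + t" by (simp add: t_def)
  have mform: "m = (replicate p (c+1) @ replicate (6-p) c @ replicate r (N+1) @ replicate (k-r) N) @ replicate z 0"
    using mz PTU p(2) r(2) by (simp add: c_def N_def)
  have sumeq: "2*(d+e) = 7*K*N + 6*t + ip + ir + 1" using sumAB eA eB ct by simp
  have F0: "Fp K ip ir t (d-e) N = 8*(Q1+Q2) - (A+B+1)^2 + 4*(d-e)^2 - 8"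
    unfolding Fp_def eA eB eQ1 eQ2 ct by (simp add: power2_eq_square algebra_simps)
  have F1: "8*(Q1+Q2) - (A+B+1)^2 + 4*(d-e)^2 - 8 = 0"
    unfolding sqQ using sumAB by (simp add: power2_eq_square algebra_simps)
  have G1: "Gp K ip ir t (d-e) = 2*W*(6*Q1 - A^2) + 12*(6*K+1)*(K*Q2 - B^2) + 2*K*(A - 6*B)^2 - (12*W - 6*W*(d-e)^2)"
    unfolding Gp_def W_def eA eB eQ1 eQ2 ct by (simp add: power2_eq_square algebra_simps)
  have "c \<in> set T" using TnN unfolding c_def by simp
  moreover have "N \<in> set U" using UnN unfolding N_def by simp
  ultimately have Nc: "N \<le> c" using sP unfolding PTU by (auto simp: sorted_wrt_append)
  show ?thesis
    apply (rule exI[of _ c], rule exI[of _ N], rule exI[of _ t], rule exI[of _ p], rule exI[of _ r], rule exI[of _ z])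
    using mform p(1) r(1) N1 Nc del ct sumeq F0 F1 G1 G0 by (simp add: K_def ip_def ir_def)
qed




lemma quadF: "a*N^2 + b*N + c = (0::int) \<Longrightarrow> (2*a*N+b)^2 = b^2 - 4*a*c"
proof -
  assume h: "a*N^2 + b*N + c = 0"
  have "(2*a*N+b)^2 = b^2 - 4*a*c + 4*a*(a*N^2 + b*N + c)"
    by (simp add: power2_eq_square algebra_simps)
  then show ?thesis using h by simp
qed

lemma no_sq: "(y::int)^2 = D \<Longrightarrow> R^2 < D \<Longrightarrow> D < (R+1)^2 \<Longrightarrow> 0 \<le> R \<Longrightarrow> False"
proof -
  assume h: "y^2 = D" "R^2 < D" "D < (R+1)^2" "0 \<le> R"
  have "R^2 < \<bar>y\<bar>^2" using h by simp
  then have "R < \<bar>y\<bar>" using h(4) by (metis abs_ge_zero power_less_imp_less_base)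
  moreover have "\<bar>y\<bar>^2 < (R+1)^2" using h by simp
  then have "\<bar>y\<bar> < R + 1" using h(4) by (metis power_less_imp_less_base add_nonneg_nonneg zero_le_one)
  ultimately show False by simp
qed

lemma is_sq: "(y::int)^2 = D \<Longrightarrow> D = R^2 \<Longrightarrow> y = R \<or> y = -R"
  by (simp add: power2_eq_iff)

lemma sq_bound: "(x::int)^2 < b \<Longrightarrow> b \<le> (n+1)^2 \<Longrightarrow> 0 \<le> n \<Longrightarrow> -n \<le> x \<and> x \<le> n"
proof -
  assume h: "x^2 < b" "b \<le> (n+1)^2" "0 \<le> n"
  then have "\<bar>x\<bar>^2 < (n+1)^2" by simp
  then have "\<bar>x\<bar> < n + 1" using h(3) by (metis power_less_imp_less_base add_nonneg_nonneg zero_le_one)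
  then show ?thesis by (auto simp: abs_less_iff)
qed

lemma Gp_bounds:
  fixes K p r t \<delta> :: int
  assumes G: "Gp K p r t \<delta> < 0" and K: "1 \<le> K" and p: "0 \<le> p" "p \<le> 6" and r: "0 \<le> r" "r \<le> K"
  shows "p*(6-p) < 6 \<and> r*(K-r) < K \<and> (6*t+p-6*r)^2 < 6*(6*K+1)"
proof -
  define W where "W = K*(6*K+1)"
  define X1 where "X1 = p*(6-p)"
  define X2 where "X2 = r*(K-r)"
  define U where "U = (6*t+p-6*r)^2"
  define D where "D = \<delta>^2"
  have W0: "W > 0" using K by (simp add: W_def)
  have X10: "X1 \<ge> 0" using p by (simp add: X1_def)
  have X20: "X2 \<ge> 0" using r by (simp add: X2_def)
  have U0: "U \<ge> 0" by (simp add: U_def)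
  have D0: "D \<ge> 0" by (simp add: D_def)
  define a1 where "a1 = W*X1"
  define a2 where "a2 = (6*K+1)*X2"
  define a3 where "a3 = K*U"
  define a4 where "a4 = W*D"
  have a10: "a1 \<ge> 0" using W0 X10 by (simp add: a1_def)
  have a20: "a2 \<ge> 0" using K X20 by (simp add: a2_def)
  have a30: "a3 \<ge> 0" using K U0 by (simp add: a3_def)
  have a40: "a4 \<ge> 0" using W0 D0 by (simp add: a4_def)
  have GG: "Gp K p r t \<delta> = 2*a1 + 12*a2 + 2*a3 - 12*W + 6*a4"
    by (simp add: Gp_def a1_def a2_def a3_def a4_def W_def X1_def X2_def U_def D_def algebra_simps)
  have "a1 < 6*W" using G GG a20 a30 a40 by linarith
  then have "W*X1 < W*6" by (simp add: a1_def algebra_simps)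
  then have 1: "X1 < 6" using W0 by simp
  have "a2 < W" using G GG a10 a30 a40 by linarith
  then have "(6*K+1)*X2 < (6*K+1)*K" by (simp add: a2_def W_def algebra_simps)
  then have 2: "X2 < K" using K by (simp add: mult_less_cancel_left_pos)
  have "a3 < 6*W" using G GG a10 a20 a40 by linarith
  then have "K*U < K*(6*(6*K+1))" by (simp add: a3_def W_def algebra_simps)
  then have 3: "U < 6*(6*K+1)" using K by (simp add: mult_less_cancel_left_pos)
  show ?thesis using 1 2 3 by (simp add: X1_def X2_def U_def)
qed


lemma solve1:
  fixes p r :: nat and t \<delta> N :: int
  assumes hp: "p \<le> 5" and hr: "r < 1" and hN: "1 \<le> N" and hc: "N \<le> 1*N + t"
    and hd0: "0 \<le> \<delta>" and hd1: "\<delta> \<le> 1"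
    and F: "Fp 1 (int p) (int r) t \<delta> N = 0" and G: "Gp 1 (int p) (int r) t \<delta> < 0"
  shows "(p, r, \<delta>, t, N) \<in> {(1, 0, 0, 0, 2)}"
proof -
  note Y = quadF[OF F[unfolded Fp_def]]
  have B: "int p*(6-int p) < 6 \<and> int r*(1-int r) < 1 \<and> (6*t+int p-6*int r)^2 < 6*(6*1+1)"
    by (rule Gp_bounds[OF G]) (use hp hr in auto)
  have "-6 \<le> 6*t+int p-6*int r \<and> 6*t+int p-6*int r \<le> 6"
    by (rule sq_bound[of _ "6*(6*1+1)"]) (use B in simp_all)
  then have tr: "-1 \<le> t \<and> t \<le> 1" using hp hr by linarith
  have hpp: "p = 0 \<or> p = 1 \<or> p = 5"
  proof -
    have "p = 0 \<or> p = 1 \<or> p = 2 \<or> p = 3 \<or> p = 4 \<or> p = 5" using hp by presburger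
    then show ?thesis using B by auto
  qed
  have hrr: "r = 0"
  proof -
    have "r = 0" using hr by presburger
    then show ?thesis using B by auto
  qed
  have hdd: "\<delta> = 0 \<or> \<delta> = 1" using hd0 hd1 by presburger
  have htt: "t = - 1 \<or> t = 0 \<or> t = 1" using tr by presburger
  have C: "(p, r, \<delta>, t) \<in> {(0, 0, 0, -1), (0, 0, 0, 0), (0, 0, 0, 1), (0, 0, 1, 0), (1, 0, 0, 0), (5, 0, 0, -1)}"
    using hpp hrr hdd htt G by (elim disjE) (simp_all add: Gp_def)
  then have "(p, r, \<delta>, t) = (0, 0, 0, -1) \<or> (p, r, \<delta>, t) = (0, 0, 0, 0) \<or> (p, r, \<delta>, t) = (0, 0, 0, 1) \<or> (p, r, \<delta>, t) = (0, 0, 1, 0) \<or> (p, r, \<delta>, t) = (1, 0, 0, 0) \<or> (p, r, \<delta>, t) = (5, 0, 0, -1)"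
    by (simp only: insert_iff empty_iff simp_thms)
  then show ?thesis
  proof (elim disjE)
    assume "(p, r, \<delta>, t) = (0, 0, 0, -1)"
    then have "p = 0" "r = 0" "\<delta> = 0" "t = - 1" by simp_all
    then have "2*7*N + (-26) = 16 \<or> 2*7*N + (-26) = - 16" using is_sq[OF Y, where R=16] by simp
    then show ?thesis using hN hc \<open>t = - 1\<close> \<open>p = 0\<close> \<open>r = 0\<close> \<open>\<delta> = 0\<close> by (simp; presburger?)
  next
    assume "(p, r, \<delta>, t) = (0, 0, 0, 0)"
    then have "p = 0" "r = 0" "\<delta> = 0" "t = 0" by simp_all
    then show ?thesis using no_sq[OF Y, where R=21] by simp
  next
    assume "(p, r, \<delta>, t) = (0, 0, 0, 1)"
    then have "p = 0" "r = 0" "\<delta> = 0" "t = 1" by simp_all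
    then have "2*7*N + (-2) = 16 \<or> 2*7*N + (-2) = - 16" using is_sq[OF Y, where R=16] by simp
    then show ?thesis using hN hc \<open>t = 1\<close> \<open>p = 0\<close> \<open>r = 0\<close> \<open>\<delta> = 0\<close> by (simp; presburger?)
  next
    assume "(p, r, \<delta>, t) = (0, 0, 1, 0)"
    then have "p = 0" "r = 0" "\<delta> = 1" "t = 0" by simp_all
    then show ?thesis using no_sq[OF Y, where R=18] by simp
  next
    assume "(p, r, \<delta>, t) = (1, 0, 0, 0)"
    then have "p = 1" "r = 0" "\<delta> = 0" "t = 0" by simp_all
    then have "2*7*N + (-12) = 16 \<or> 2*7*N + (-12) = - 16" using is_sq[OF Y, where R=16] by simp
    then show ?thesis using hN hc \<open>t = 0\<close> \<open>p = 1\<close> \<open>r = 0\<close> \<open>\<delta> = 0\<close> by (simp; presburger?)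
  next
    assume "(p, r, \<delta>, t) = (5, 0, 0, -1)"
    then have "p = 5" "r = 0" "\<delta> = 0" "t = - 1" by simp_all
    then have "2*7*N + (-16) = 16 \<or> 2*7*N + (-16) = - 16" using is_sq[OF Y, where R=16] by simp
    then show ?thesis using hN hc \<open>t = - 1\<close> \<open>p = 5\<close> \<open>r = 0\<close> \<open>\<delta> = 0\<close> by (simp; presburger?)
  qed
qed

lemma solve2:
  fixes p r :: nat and t \<delta> N :: int
  assumes hp: "p \<le> 5" and hr: "r < 2" and hN: "1 \<le> N" and hc: "N \<le> 2*N + t"
    and hd0: "0 \<le> \<delta>" and hd1: "\<delta> \<le> 1"
    and F: "Fp 2 (int p) (int r) t \<delta> N = 0" and G: "Gp 2 (int p) (int r) t \<delta> < 0"
  shows "(p, r, \<delta>, t, N) \<in> {(0, 1, 0, 1, 2)}"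
proof -
  note Y = quadF[OF F[unfolded Fp_def]]
  have B: "int p*(6-int p) < 6 \<and> int r*(2-int r) < 2 \<and> (6*t+int p-6*int r)^2 < 6*(6*2+1)"
    by (rule Gp_bounds[OF G]) (use hp hr in auto)
  have "-8 \<le> 6*t+int p-6*int r \<and> 6*t+int p-6*int r \<le> 8"
    by (rule sq_bound[of _ "6*(6*2+1)"]) (use B in simp_all)
  then have tr: "-2 \<le> t \<and> t \<le> 2" using hp hr by linarith
  have hpp: "p = 0 \<or> p = 1 \<or> p = 5"
  proof -
    have "p = 0 \<or> p = 1 \<or> p = 2 \<or> p = 3 \<or> p = 4 \<or> p = 5" using hp by presburger
    then show ?thesis using B by auto
  qed
  have hrr: "r = 0 \<or> r = 1"
  proof -
    have "r = 0 \<or> r = 1" using hr by presburger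
    then show ?thesis using B by auto
  qed
  have hdd: "\<delta> = 0 \<or> \<delta> = 1" using hd0 hd1 by presburger
  have htt: "t = - 2 \<or> t = - 1 \<or> t = 0 \<or> t = 1 \<or> t = 2" using tr by presburger
  have C: "(p, r, \<delta>, t) \<in> {(0, 0, 0, -1), (0, 0, 0, 0), (0, 0, 0, 1), (0, 0, 1, -1), (0, 0, 1, 0), (0, 0, 1, 1), (0, 1, 0, 0), (0, 1, 0, 1), (0, 1, 0, 2), (1, 0, 0, 0), (5, 0, 0, -1)}"
    using hpp hrr hdd htt G by (elim disjE) (simp_all add: Gp_def)
  then have "(p, r, \<delta>, t) = (0, 0, 0, -1) \<or> (p, r, \<delta>, t) = (0, 0, 0, 0) \<or> (p, r, \<delta>, t) = (0, 0, 0, 1) \<or> (p, r, \<delta>, t) = (0, 0, 1, -1) \<or> (p, r, \<delta>, t) = (0, 0, 1, 0) \<or> (p, r, \<delta>, t) = (0, 0, 1, 1) \<or> (p, r, \<delta>, t) = (0, 1, 0, 0) \<or> (p, r, \<delta>, t) = (0, 1, 0, 1) \<or> (p, r, \<delta>, t) = (0, 1, 0, 2) \<or> (p, r, \<delta>, t) = (1, 0, 0, 0) \<or> (p, r, \<delta>, t) = (5, 0, 0, -1)"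
    by (simp only: insert_iff empty_iff simp_thms)
  then show ?thesis
  proof (elim disjE)
    assume "(p, r, \<delta>, t) = (0, 0, 0, -1)"
    then have "p = 0" "r = 0" "\<delta> = 0" "t = - 1" by simp_all
    then show ?thesis using no_sq[OF Y, where R=44] by simp
  next
    assume "(p, r, \<delta>, t) = (0, 0, 0, 0)"
    then have "p = 0" "r = 0" "\<delta> = 0" "t = 0" by simp_all
    then show ?thesis using no_sq[OF Y, where R=34] by simp
  next
    assume "(p, r, \<delta>, t) = (0, 0, 0, 1)"
    then have "p = 0" "r = 0" "\<delta> = 0" "t = 1" by simp_all
    then show ?thesis using no_sq[OF Y, where R=21] by simp
  next
    assume "(p, r, \<delta>, t) = (0, 0, 1, -1)"
    then have "p = 0" "r = 0" "\<delta> = 1" "t = - 1" by simp_all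
    then show ?thesis using no_sq[OF Y, where R=42] by simp
  next
    assume "(p, r, \<delta>, t) = (0, 0, 1, 0)"
    then have "p = 0" "r = 0" "\<delta> = 1" "t = 0" by simp_all
    then have "2*12*N + (-28) = 32 \<or> 2*12*N + (-28) = - 32" using is_sq[OF Y, where R=32] by simp
    then show ?thesis using hN hc \<open>t = 0\<close> \<open>p = 0\<close> \<open>r = 0\<close> \<open>\<delta> = 1\<close> by (simp; presburger?)
  next
    assume "(p, r, \<delta>, t) = (0, 0, 1, 1)"
    then have "p = 0" "r = 0" "\<delta> = 1" "t = 1" by simp_all
    then have "2*12*N + (-4) = 16 \<or> 2*12*N + (-4) = - 16" using is_sq[OF Y, where R=16] by simp
    then show ?thesis using hN hc \<open>t = 1\<close> \<open>p = 0\<close> \<open>r = 0\<close> \<open>\<delta> = 1\<close> by (simp; presburger?)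
  next
    assume "(p, r, \<delta>, t) = (0, 1, 0, 0)"
    then have "p = 0" "r = 1" "\<delta> = 0" "t = 0" by simp_all
    then show ?thesis using no_sq[OF Y, where R=42] by simp
  next
    assume "(p, r, \<delta>, t) = (0, 1, 0, 1)"
    then have "p = 0" "r = 1" "\<delta> = 0" "t = 1" by simp_all
    then have "2*12*N + (-16) = 32 \<or> 2*12*N + (-16) = - 32" using is_sq[OF Y, where R=32] by simp
    then show ?thesis using hN hc \<open>t = 1\<close> \<open>p = 0\<close> \<open>r = 1\<close> \<open>\<delta> = 0\<close> by (simp; presburger?)
  next
    assume "(p, r, \<delta>, t) = (0, 1, 0, 2)"
    then have "p = 0" "r = 1" "\<delta> = 0" "t = 2" by simp_all
    then have "2*12*N + (8) = 16 \<or> 2*12*N + (8) = - 16" using is_sq[OF Y, where R=16] by simp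
    then show ?thesis using hN hc \<open>t = 2\<close> \<open>p = 0\<close> \<open>r = 1\<close> \<open>\<delta> = 0\<close> by (simp; presburger?)
  next
    assume "(p, r, \<delta>, t) = (1, 0, 0, 0)"
    then have "p = 1" "r = 0" "\<delta> = 0" "t = 0" by simp_all
    then show ?thesis using no_sq[OF Y, where R=27] by simp
  next
    assume "(p, r, \<delta>, t) = (5, 0, 0, -1)"
    then have "p = 5" "r = 0" "\<delta> = 0" "t = - 1" by simp_all
    then have "2*12*N + (-32) = 32 \<or> 2*12*N + (-32) = - 32" using is_sq[OF Y, where R=32] by simp
    then show ?thesis using hN hc \<open>t = - 1\<close> \<open>p = 5\<close> \<open>r = 0\<close> \<open>\<delta> = 0\<close> by (simp; presburger?)
  qed
qed

lemma solve3:
  fixes p r :: nat and t \<delta> N :: int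
  assumes hp: "p \<le> 5" and hr: "r < 3" and hN: "1 \<le> N" and hc: "N \<le> 3*N + t"
    and hd0: "0 \<le> \<delta>" and hd1: "\<delta> \<le> 1"
    and F: "Fp 3 (int p) (int r) t \<delta> N = 0" and G: "Gp 3 (int p) (int r) t \<delta> < 0"
  shows "(p, r, \<delta>, t, N) \<in> {(0, 0, 0, -1, 5), (0, 0, 0, 0, 3), (0, 0, 0, 1, 1)}"
proof -
  note Y = quadF[OF F[unfolded Fp_def]]
  have B: "int p*(6-int p) < 6 \<and> int r*(3-int r) < 3 \<and> (6*t+int p-6*int r)^2 < 6*(6*3+1)"
    by (rule Gp_bounds[OF G]) (use hp hr in auto)
  have "-10 \<le> 6*t+int p-6*int r \<and> 6*t+int p-6*int r \<le> 10"
    by (rule sq_bound[of _ "6*(6*3+1)"]) (use B in simp_all)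
  then have tr: "-2 \<le> t \<and> t \<le> 3" using hp hr by linarith
  have hpp: "p = 0 \<or> p = 1 \<or> p = 5"
  proof -
    have "p = 0 \<or> p = 1 \<or> p = 2 \<or> p = 3 \<or> p = 4 \<or> p = 5" using hp by presburger
    then show ?thesis using B by auto
  qed
  have hrr: "r = 0 \<or> r = 1 \<or> r = 2"
  proof -
    have "r = 0 \<or> r = 1 \<or> r = 2" using hr by presburger
    then show ?thesis using B by auto
  qed
  have hdd: "\<delta> = 0 \<or> \<delta> = 1" using hd0 hd1 by presburger
  have htt: "t = - 2 \<or> t = - 1 \<or> t = 0 \<or> t = 1 \<or> t = 2 \<or> t = 3" using tr by presburger
  have C: "(p, r, \<delta>, t) \<in> {(0, 0, 0, -1), (0, 0, 0, 0), (0, 0, 0, 1), (0, 0, 1, -1), (0, 0, 1, 0), (0, 0, 1, 1), (0, 1, 0, 0), (0, 1, 0, 1), (0, 1, 0, 2), (0, 2, 0, 1), (0, 2, 0, 2), (0, 2, 0, 3), (1, 0, 0, 0), (5, 0, 0, -1)}"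
    using hpp hrr hdd htt G by (elim disjE) (simp_all add: Gp_def)
  then have "(p, r, \<delta>, t) = (0, 0, 0, -1) \<or> (p, r, \<delta>, t) = (0, 0, 0, 0) \<or> (p, r, \<delta>, t) = (0, 0, 0, 1) \<or> (p, r, \<delta>, t) = (0, 0, 1, -1) \<or> (p, r, \<delta>, t) = (0, 0, 1, 0) \<or> (p, r, \<delta>, t) = (0, 0, 1, 1) \<or> (p, r, \<delta>, t) = (0, 1, 0, 0) \<or> (p, r, \<delta>, t) = (0, 1, 0, 1) \<or> (p, r, \<delta>, t) = (0, 1, 0, 2) \<or> (p, r, \<delta>, t) = (0, 2, 0, 1) \<or> (p, r, \<delta>, t) = (0, 2, 0, 2) \<or> (p, r, \<delta>, t) = (0, 2, 0, 3) \<or> (p, r, \<delta>, t) = (1, 0, 0, 0) \<or> (p, r, \<delta>, t) = (5, 0, 0, -1)"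
    by (simp only: insert_iff empty_iff simp_thms)
  then show ?thesis
  proof (elim disjE)
    assume "(p, r, \<delta>, t) = (0, 0, 0, -1)"
    then have "p = 0" "r = 0" "\<delta> = 0" "t = - 1" by simp_all
    then have "2*15*N + (-78) = 72 \<or> 2*15*N + (-78) = - 72" using is_sq[OF Y, where R=72] by simp
    then show ?thesis using hN hc \<open>t = - 1\<close> \<open>p = 0\<close> \<open>r = 0\<close> \<open>\<delta> = 0\<close> by (simp; presburger?)
  next
    assume "(p, r, \<delta>, t) = (0, 0, 0, 0)"
    then have "p = 0" "r = 0" "\<delta> = 0" "t = 0" by simp_all
    then have "2*15*N + (-42) = 48 \<or> 2*15*N + (-42) = - 48" using is_sq[OF Y, where R=48] by simp
    then show ?thesis using hN hc \<open>t = 0\<close> \<open>p = 0\<close> \<open>r = 0\<close> \<open>\<delta> = 0\<close> by (simp; presburger?)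
  next
    assume "(p, r, \<delta>, t) = (0, 0, 0, 1)"
    then have "p = 0" "r = 0" "\<delta> = 0" "t = 1" by simp_all
    then have "2*15*N + (-6) = 24 \<or> 2*15*N + (-6) = - 24" using is_sq[OF Y, where R=24] by simp
    then show ?thesis using hN hc \<open>t = 1\<close> \<open>p = 0\<close> \<open>r = 0\<close> \<open>\<delta> = 0\<close> by (simp; presburger?)
  next
    assume "(p, r, \<delta>, t) = (0, 0, 1, -1)"
    then have "p = 0" "r = 0" "\<delta> = 1" "t = - 1" by simp_all
    then show ?thesis using no_sq[OF Y, where R=70] by simp
  next
    assume "(p, r, \<delta>, t) = (0, 0, 1, 0)"
    then have "p = 0" "r = 0" "\<delta> = 1" "t = 0" by simp_all
    then show ?thesis using no_sq[OF Y, where R=45] by simp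
  next
    assume "(p, r, \<delta>, t) = (0, 0, 1, 1)"
    then have "p = 0" "r = 0" "\<delta> = 1" "t = 1" by simp_all
    then show ?thesis using no_sq[OF Y, where R=18] by simp
  next
    assume "(p, r, \<delta>, t) = (0, 1, 0, 0)"
    then have "p = 0" "r = 1" "\<delta> = 0" "t = 0" by simp_all
    then show ?thesis using no_sq[OF Y, where R=69] by simp
  next
    assume "(p, r, \<delta>, t) = (0, 1, 0, 1)"
    then have "p = 0" "r = 1" "\<delta> = 0" "t = 1" by simp_all
    then show ?thesis using no_sq[OF Y, where R=44] by simp
  next
    assume "(p, r, \<delta>, t) = (0, 1, 0, 2)"
    then have "p = 0" "r = 1" "\<delta> = 0" "t = 2" by simp_all
    then have "2*15*N + (4) = 16 \<or> 2*15*N + (4) = - 16" using is_sq[OF Y, where R=16] by simp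
    then show ?thesis using hN hc \<open>t = 2\<close> \<open>p = 0\<close> \<open>r = 1\<close> \<open>\<delta> = 0\<close> by (simp; presburger?)
  next
    assume "(p, r, \<delta>, t) = (0, 2, 0, 1)"
    then have "p = 0" "r = 2" "\<delta> = 0" "t = 1" by simp_all
    then show ?thesis using no_sq[OF Y, where R=69] by simp
  next
    assume "(p, r, \<delta>, t) = (0, 2, 0, 2)"
    then have "p = 0" "r = 2" "\<delta> = 0" "t = 2" by simp_all
    then show ?thesis using no_sq[OF Y, where R=44] by simp
  next
    assume "(p, r, \<delta>, t) = (0, 2, 0, 3)"
    then have "p = 0" "r = 2" "\<delta> = 0" "t = 3" by simp_all
    then have "2*15*N + (14) = 16 \<or> 2*15*N + (14) = - 16" using is_sq[OF Y, where R=16] by simp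
    then show ?thesis using hN hc \<open>t = 3\<close> \<open>p = 0\<close> \<open>r = 2\<close> \<open>\<delta> = 0\<close> by (simp; presburger?)
  next
    assume "(p, r, \<delta>, t) = (1, 0, 0, 0)"
    then have "p = 1" "r = 0" "\<delta> = 0" "t = 0" by simp_all
    then show ?thesis using no_sq[OF Y, where R=39] by simp
  next
    assume "(p, r, \<delta>, t) = (5, 0, 0, -1)"
    then have "p = 5" "r = 0" "\<delta> = 0" "t = - 1" by simp_all
    then have "2*15*N + (-48) = 48 \<or> 2*15*N + (-48) = - 48" using is_sq[OF Y, where R=48] by simp
    then show ?thesis using hN hc \<open>t = - 1\<close> \<open>p = 5\<close> \<open>r = 0\<close> \<open>\<delta> = 0\<close> by (simp; presburger?)
  qed
qed

lemma solve4:
  fixes p r :: nat and t \<delta> N :: int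
  assumes hp: "p \<le> 5" and hr: "r < 4" and hN: "1 \<le> N" and hc: "N \<le> 4*N + t"
    and hd0: "0 \<le> \<delta>" and hd1: "\<delta> \<le> 1"
    and F: "Fp 4 (int p) (int r) t \<delta> N = 0" and G: "Gp 4 (int p) (int r) t \<delta> < 0"
  shows "(p, r, \<delta>, t, N) \<in> {(5, 0, 0, -1, 4)}"
proof -
  note Y = quadF[OF F[unfolded Fp_def]]
  have B: "int p*(6-int p) < 6 \<and> int r*(4-int r) < 4 \<and> (6*t+int p-6*int r)^2 < 6*(6*4+1)"
    by (rule Gp_bounds[OF G]) (use hp hr in auto)
  have "-12 \<le> 6*t+int p-6*int r \<and> 6*t+int p-6*int r \<le> 12"
    by (rule sq_bound[of _ "6*(6*4+1)"]) (use B in simp_all)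
  then have tr: "-2 \<le> t \<and> t \<le> 5" using hp hr by linarith
  have hpp: "p = 0 \<or> p = 1 \<or> p = 5"
  proof -
    have "p = 0 \<or> p = 1 \<or> p = 2 \<or> p = 3 \<or> p = 4 \<or> p = 5" using hp by presburger
    then show ?thesis using B by auto
  qed
  have hrr: "r = 0 \<or> r = 1 \<or> r = 3"
  proof -
    have "r = 0 \<or> r = 1 \<or> r = 2 \<or> r = 3" using hr by presburger
    then show ?thesis using B by auto
  qed
  have hdd: "\<delta> = 0 \<or> \<delta> = 1" using hd0 hd1 by presburger
  have htt: "t = - 2 \<or> t = - 1 \<or> t = 0 \<or> t = 1 \<or> t = 2 \<or> t = 3 \<or> t = 4 \<or> t = 5" using tr by presburger
  have C: "(p, r, \<delta>, t) \<in> {(0, 0, 0, -2), (0, 0, 0, -1), (0, 0, 0, 0), (0, 0, 0, 1), (0, 0, 0, 2), (0, 0, 1, -1), (0, 0, 1, 0), (0, 0, 1, 1), (0, 1, 0, 0), (0, 1, 0, 1), (0, 1, 0, 2), (0, 3, 0, 2), (0, 3, 0, 3), (0, 3, 0, 4), (1, 0, 0, 0), (5, 0, 0, -1)}"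
    using hpp hrr hdd htt G by (elim disjE) (simp_all add: Gp_def)
  then have "(p, r, \<delta>, t) = (0, 0, 0, -2) \<or> (p, r, \<delta>, t) = (0, 0, 0, -1) \<or> (p, r, \<delta>, t) = (0, 0, 0, 0) \<or> (p, r, \<delta>, t) = (0, 0, 0, 1) \<or> (p, r, \<delta>, t) = (0, 0, 0, 2) \<or> (p, r, \<delta>, t) = (0, 0, 1, -1) \<or> (p, r, \<delta>, t) = (0, 0, 1, 0) \<or> (p, r, \<delta>, t) = (0, 0, 1, 1) \<or> (p, r, \<delta>, t) = (0, 1, 0, 0) \<or> (p, r, \<delta>, t) = (0, 1, 0, 1) \<or> (p, r, \<delta>, t) = (0, 1, 0, 2) \<or> (p, r, \<delta>, t) = (0, 3, 0, 2) \<or> (p, r, \<delta>, t) = (0, 3, 0, 3) \<or> (p, r, \<delta>, t) = (0, 3, 0, 4) \<or> (p, r, \<delta>, t) = (1, 0, 0, 0) \<or> (p, r, \<delta>, t) = (5, 0, 0, -1)"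
    by (simp only: insert_iff empty_iff simp_thms)
  then show ?thesis
  proof (elim disjE)
    assume "(p, r, \<delta>, t) = (0, 0, 0, -2)"
    then have "p = 0" "r = 0" "\<delta> = 0" "t = - 2" by simp_all
    then show ?thesis using no_sq[OF Y, where R=138] by simp
  next
    assume "(p, r, \<delta>, t) = (0, 0, 0, -1)"
    then have "p = 0" "r = 0" "\<delta> = 0" "t = - 1" by simp_all
    then show ?thesis using no_sq[OF Y, where R=99] by simp
  next
    assume "(p, r, \<delta>, t) = (0, 0, 0, 0)"
    then have "p = 0" "r = 0" "\<delta> = 0" "t = 0" by simp_all
    then show ?thesis using no_sq[OF Y, where R=60] by simp
  next
    assume "(p, r, \<delta>, t) = (0, 0, 0, 1)"
    then have "p = 0" "r = 0" "\<delta> = 0" "t = 1" by simp_all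
    then show ?thesis using no_sq[OF Y, where R=25] by simp
  next
    assume "(p, r, \<delta>, t) = (0, 0, 0, 2)"
    then have "p = 0" "r = 0" "\<delta> = 0" "t = 2" by simp_all
    then show ?thesis using no_sq[OF Y, where R=25] by simp
  next
    assume "(p, r, \<delta>, t) = (0, 0, 1, -1)"
    then have "p = 0" "r = 0" "\<delta> = 1" "t = - 1" by simp_all
    then show ?thesis using no_sq[OF Y, where R=97] by simp
  next
    assume "(p, r, \<delta>, t) = (0, 0, 1, 0)"
    then have "p = 0" "r = 0" "\<delta> = 1" "t = 0" by simp_all
    then show ?thesis using no_sq[OF Y, where R=58] by simp
  next
    assume "(p, r, \<delta>, t) = (0, 0, 1, 1)"
    then have "p = 0" "r = 0" "\<delta> = 1" "t = 1" by simp_all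
    then show ?thesis using no_sq[OF Y, where R=19] by simp
  next
    assume "(p, r, \<delta>, t) = (0, 1, 0, 0)"
    then have "p = 0" "r = 1" "\<delta> = 0" "t = 0" by simp_all
    then show ?thesis using no_sq[OF Y, where R=97] by simp
  next
    assume "(p, r, \<delta>, t) = (0, 1, 0, 1)"
    then have "p = 0" "r = 1" "\<delta> = 0" "t = 1" by simp_all
    then show ?thesis using no_sq[OF Y, where R=57] by simp
  next
    assume "(p, r, \<delta>, t) = (0, 1, 0, 2)"
    then have "p = 0" "r = 1" "\<delta> = 0" "t = 2" by simp_all
    then have "2*16*N + (0) = 16 \<or> 2*16*N + (0) = - 16" using is_sq[OF Y, where R=16] by simp
    then show ?thesis using hN hc \<open>t = 2\<close> \<open>p = 0\<close> \<open>r = 1\<close> \<open>\<delta> = 0\<close> by (simp; presburger?)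
  next
    assume "(p, r, \<delta>, t) = (0, 3, 0, 2)"
    then have "p = 0" "r = 3" "\<delta> = 0" "t = 2" by simp_all
    then show ?thesis using no_sq[OF Y, where R=97] by simp
  next
    assume "(p, r, \<delta>, t) = (0, 3, 0, 3)"
    then have "p = 0" "r = 3" "\<delta> = 0" "t = 3" by simp_all
    then show ?thesis using no_sq[OF Y, where R=57] by simp
  next
    assume "(p, r, \<delta>, t) = (0, 3, 0, 4)"
    then have "p = 0" "r = 3" "\<delta> = 0" "t = 4" by simp_all
    then have "2*16*N + (16) = 16 \<or> 2*16*N + (16) = - 16" using is_sq[OF Y, where R=16] by simp
    then show ?thesis using hN hc \<open>t = 4\<close> \<open>p = 0\<close> \<open>r = 3\<close> \<open>\<delta> = 0\<close> by (simp; presburger?)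
  next
    assume "(p, r, \<delta>, t) = (1, 0, 0, 0)"
    then have "p = 1" "r = 0" "\<delta> = 0" "t = 0" by simp_all
    then show ?thesis using no_sq[OF Y, where R=50] by simp
  next
    assume "(p, r, \<delta>, t) = (5, 0, 0, -1)"
    then have "p = 5" "r = 0" "\<delta> = 0" "t = - 1" by simp_all
    then have "2*16*N + (-64) = 64 \<or> 2*16*N + (-64) = - 64" using is_sq[OF Y, where R=64] by simp
    then show ?thesis using hN hc \<open>t = - 1\<close> \<open>p = 5\<close> \<open>r = 0\<close> \<open>\<delta> = 0\<close> by (simp; presburger?)
  qed
qed

lemma solve5:
  fixes p r :: nat and t \<delta> N :: int
  assumes hp: "p \<le> 5" and hr: "r < 5" and hN: "1 \<le> N" and hc: "N \<le> 5*N + t"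
    and hd0: "0 \<le> \<delta>" and hd1: "\<delta> \<le> 1"
    and F: "Fp 5 (int p) (int r) t \<delta> N = 0" and G: "Gp 5 (int p) (int r) t \<delta> < 0"
  shows "(p, r, \<delta>, t, N) \<in> {(0, 0, 1, 1, 1)}"
proof -
  note Y = quadF[OF F[unfolded Fp_def]]
  have B: "int p*(6-int p) < 6 \<and> int r*(5-int r) < 5 \<and> (6*t+int p-6*int r)^2 < 6*(6*5+1)"
    by (rule Gp_bounds[OF G]) (use hp hr in auto)
  have "-13 \<le> 6*t+int p-6*int r \<and> 6*t+int p-6*int r \<le> 13"
    by (rule sq_bound[of _ "6*(6*5+1)"]) (use B in simp_all)
  then have tr: "-3 \<le> t \<and> t \<le> 6" using hp hr by linarith
  have hpp: "p = 0 \<or> p = 1 \<or> p = 5"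
  proof -
    have "p = 0 \<or> p = 1 \<or> p = 2 \<or> p = 3 \<or> p = 4 \<or> p = 5" using hp by presburger
    then show ?thesis using B by auto
  qed
  have hrr: "r = 0 \<or> r = 1 \<or> r = 4"
  proof -
    have "r = 0 \<or> r = 1 \<or> r = 2 \<or> r = 3 \<or> r = 4" using hr by presburger
    then show ?thesis using B by auto
  qed
  have hdd: "\<delta> = 0 \<or> \<delta> = 1" using hd0 hd1 by presburger
  have htt: "t = - 3 \<or> t = - 2 \<or> t = - 1 \<or> t = 0 \<or> t = 1 \<or> t = 2 \<or> t = 3 \<or> t = 4 \<or> t = 5 \<or> t = 6" using tr by presburger
  have C: "(p, r, \<delta>, t) \<in> {(0, 0, 0, -2), (0, 0, 0, -1), (0, 0, 0, 0), (0, 0, 0, 1), (0, 0, 0, 2), (0, 0, 1, -1), (0, 0, 1, 0), (0, 0, 1, 1), (0, 1, 0, 0), (0, 1, 0, 1), (0, 1, 0, 2), (0, 4, 0, 3), (0, 4, 0, 4), (0, 4, 0, 5), (1, 0, 0, -1), (1, 0, 0, 0), (5, 0, 0, -1), (5, 0, 0, 0)}"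
    using hpp hrr hdd htt G by (elim disjE) (simp_all add: Gp_def)
  then have "(p, r, \<delta>, t) = (0, 0, 0, -2) \<or> (p, r, \<delta>, t) = (0, 0, 0, -1) \<or> (p, r, \<delta>, t) = (0, 0, 0, 0) \<or> (p, r, \<delta>, t) = (0, 0, 0, 1) \<or> (p, r, \<delta>, t) = (0, 0, 0, 2) \<or> (p, r, \<delta>, t) = (0, 0, 1, -1) \<or> (p, r, \<delta>, t) = (0, 0, 1, 0) \<or> (p, r, \<delta>, t) = (0, 0, 1, 1) \<or> (p, r, \<delta>, t) = (0, 1, 0, 0) \<or> (p, r, \<delta>, t) = (0, 1, 0, 1) \<or> (p, r, \<delta>, t) = (0, 1, 0, 2) \<or> (p, r, \<delta>, t) = (0, 4, 0, 3) \<or> (p, r, \<delta>, t) = (0, 4, 0, 4) \<or> (p, r, \<delta>, t) = (0, 4, 0, 5) \<or> (p, r, \<delta>, t) = (1, 0, 0, -1) \<or> (p, r, \<delta>, t) = (1, 0, 0, 0) \<or> (p, r, \<delta>, t) = (5, 0, 0, -1) \<or> (p, r, \<delta>, t) = (5, 0, 0, 0)"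
    by (simp only: insert_iff empty_iff simp_thms)
  then show ?thesis
  proof (elim disjE)
    assume "(p, r, \<delta>, t) = (0, 0, 0, -2)"
    then have "p = 0" "r = 0" "\<delta> = 0" "t = - 2" by simp_all
    then show ?thesis using no_sq[OF Y, where R=179] by simp
  next
    assume "(p, r, \<delta>, t) = (0, 0, 0, -1)"
    then have "p = 0" "r = 0" "\<delta> = 0" "t = - 1" by simp_all
    then show ?thesis using no_sq[OF Y, where R=126] by simp
  next
    assume "(p, r, \<delta>, t) = (0, 0, 0, 0)"
    then have "p = 0" "r = 0" "\<delta> = 0" "t = 0" by simp_all
    then show ?thesis using no_sq[OF Y, where R=73] by simp
  next
    assume "(p, r, \<delta>, t) = (0, 0, 0, 1)"
    then have "p = 0" "r = 0" "\<delta> = 0" "t = 1" by simp_all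
    then show ?thesis using no_sq[OF Y, where R=25] by simp
  next
    assume "(p, r, \<delta>, t) = (0, 0, 0, 2)"
    then have "p = 0" "r = 0" "\<delta> = 0" "t = 2" by simp_all
    then have "2*15*N + (50) = 40 \<or> 2*15*N + (50) = - 40" using is_sq[OF Y, where R=40] by simp
    then show ?thesis using hN hc \<open>t = 2\<close> \<open>p = 0\<close> \<open>r = 0\<close> \<open>\<delta> = 0\<close> by (simp; presburger?)
  next
    assume "(p, r, \<delta>, t) = (0, 0, 1, -1)"
    then have "p = 0" "r = 0" "\<delta> = 1" "t = - 1" by simp_all
    then show ?thesis using no_sq[OF Y, where R=125] by simp
  next
    assume "(p, r, \<delta>, t) = (0, 0, 1, 0)"
    then have "p = 0" "r = 0" "\<delta> = 1" "t = 0" by simp_all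
    then show ?thesis using no_sq[OF Y, where R=72] by simp
  next
    assume "(p, r, \<delta>, t) = (0, 0, 1, 1)"
    then have "p = 0" "r = 0" "\<delta> = 1" "t = 1" by simp_all
    then have "2*15*N + (-10) = 20 \<or> 2*15*N + (-10) = - 20" using is_sq[OF Y, where R=20] by simp
    then show ?thesis using hN hc \<open>t = 1\<close> \<open>p = 0\<close> \<open>r = 0\<close> \<open>\<delta> = 1\<close> by (simp; presburger?)
  next
    assume "(p, r, \<delta>, t) = (0, 1, 0, 0)"
    then have "p = 0" "r = 1" "\<delta> = 0" "t = 0" by simp_all
    then show ?thesis using no_sq[OF Y, where R=124] by simp
  next
    assume "(p, r, \<delta>, t) = (0, 1, 0, 1)"
    then have "p = 0" "r = 1" "\<delta> = 0" "t = 1" by simp_all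
    then show ?thesis using no_sq[OF Y, where R=71] by simp
  next
    assume "(p, r, \<delta>, t) = (0, 1, 0, 2)"
    then have "p = 0" "r = 1" "\<delta> = 0" "t = 2" by simp_all
    then have "2*15*N + (-4) = 16 \<or> 2*15*N + (-4) = - 16" using is_sq[OF Y, where R=16] by simp
    then show ?thesis using hN hc \<open>t = 2\<close> \<open>p = 0\<close> \<open>r = 1\<close> \<open>\<delta> = 0\<close> by (simp; presburger?)
  next
    assume "(p, r, \<delta>, t) = (0, 4, 0, 3)"
    then have "p = 0" "r = 4" "\<delta> = 0" "t = 3" by simp_all
    then show ?thesis using no_sq[OF Y, where R=124] by simp
  next
    assume "(p, r, \<delta>, t) = (0, 4, 0, 4)"
    then have "p = 0" "r = 4" "\<delta> = 0" "t = 4" by simp_all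
    then show ?thesis using no_sq[OF Y, where R=71] by simp
  next
    assume "(p, r, \<delta>, t) = (0, 4, 0, 5)"
    then have "p = 0" "r = 4" "\<delta> = 0" "t = 5" by simp_all
    then have "2*15*N + (14) = 16 \<or> 2*15*N + (14) = - 16" using is_sq[OF Y, where R=16] by simp
    then show ?thesis using hN hc \<open>t = 5\<close> \<open>p = 0\<close> \<open>r = 4\<close> \<open>\<delta> = 0\<close> by (simp; presburger?)
  next
    assume "(p, r, \<delta>, t) = (1, 0, 0, -1)"
    then have "p = 1" "r = 0" "\<delta> = 0" "t = - 1" by simp_all
    then show ?thesis using no_sq[OF Y, where R=115] by simp
  next
    assume "(p, r, \<delta>, t) = (1, 0, 0, 0)"
    then have "p = 1" "r = 0" "\<delta> = 0" "t = 0" by simp_all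
    then show ?thesis using no_sq[OF Y, where R=61] by simp
  next
    assume "(p, r, \<delta>, t) = (5, 0, 0, -1)"
    then have "p = 5" "r = 0" "\<delta> = 0" "t = - 1" by simp_all
    then have "2*15*N + (-80) = 80 \<or> 2*15*N + (-80) = - 80" using is_sq[OF Y, where R=80] by simp
    then show ?thesis using hN hc \<open>t = - 1\<close> \<open>p = 5\<close> \<open>r = 0\<close> \<open>\<delta> = 0\<close> by (simp; presburger?)
  next
    assume "(p, r, \<delta>, t) = (5, 0, 0, 0)"
    then have "p = 5" "r = 0" "\<delta> = 0" "t = 0" by simp_all
    then show ?thesis using no_sq[OF Y, where R=25] by simp
  qed
qed

lemma solve6:
  fixes p r :: nat and t \<delta> N :: int
  assumes hp: "p \<le> 5" and hr: "r < 6" and hN: "1 \<le> N" and hc: "N \<le> 6*N + t"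
    and hd0: "0 \<le> \<delta>" and hd1: "\<delta> \<le> 1"
    and F: "Fp 6 (int p) (int r) t \<delta> N = 0" and G: "Gp 6 (int p) (int r) t \<delta> < 0"
  shows "(p, r, \<delta>, t, N) \<in> {(0, 1, 0, 2, 1), (5, 0, 0, -1, 8)}"
proof -
  note Y = quadF[OF F[unfolded Fp_def]]
  have B: "int p*(6-int p) < 6 \<and> int r*(6-int r) < 6 \<and> (6*t+int p-6*int r)^2 < 6*(6*6+1)"
    by (rule Gp_bounds[OF G]) (use hp hr in auto)
  have "-14 \<le> 6*t+int p-6*int r \<and> 6*t+int p-6*int r \<le> 14"
    by (rule sq_bound[of _ "6*(6*6+1)"]) (use B in simp_all)
  then have tr: "-3 \<le> t \<and> t \<le> 7" using hp hr by linarith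
  have hpp: "p = 0 \<or> p = 1 \<or> p = 5"
  proof -
    have "p = 0 \<or> p = 1 \<or> p = 2 \<or> p = 3 \<or> p = 4 \<or> p = 5" using hp by presburger
    then show ?thesis using B by auto
  qed
  have hrr: "r = 0 \<or> r = 1 \<or> r = 5"
  proof -
    have "r = 0 \<or> r = 1 \<or> r = 2 \<or> r = 3 \<or> r = 4 \<or> r = 5" using hr by presburger
    then show ?thesis using B by auto
  qed
  have hdd: "\<delta> = 0 \<or> \<delta> = 1" using hd0 hd1 by presburger
  have htt: "t = - 3 \<or> t = - 2 \<or> t = - 1 \<or> t = 0 \<or> t = 1 \<or> t = 2 \<or> t = 3 \<or> t = 4 \<or> t = 5 \<or> t = 6 \<or> t = 7" using tr by presburger
  have C: "(p, r, \<delta>, t) \<in> {(0, 0, 0, -2), (0, 0, 0, -1), (0, 0, 0, 0), (0, 0, 0, 1), (0, 0, 0, 2), (0, 0, 1, -1), (0, 0, 1, 0), (0, 0, 1, 1), (0, 1, 0, 0), (0, 1, 0, 1), (0, 1, 0, 2), (0, 5, 0, 4), (0, 5, 0, 5), (0, 5, 0, 6), (1, 0, 0, -1), (1, 0, 0, 0), (5, 0, 0, -1), (5, 0, 0, 0)}"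
    using hpp hrr hdd htt G by (elim disjE) (simp_all add: Gp_def)
  then have "(p, r, \<delta>, t) = (0, 0, 0, -2) \<or> (p, r, \<delta>, t) = (0, 0, 0, -1) \<or> (p, r, \<delta>, t) = (0, 0, 0, 0) \<or> (p, r, \<delta>, t) = (0, 0, 0, 1) \<or> (p, r, \<delta>, t) = (0, 0, 0, 2) \<or> (p, r, \<delta>, t) = (0, 0, 1, -1) \<or> (p, r, \<delta>, t) = (0, 0, 1, 0) \<or> (p, r, \<delta>, t) = (0, 0, 1, 1) \<or> (p, r, \<delta>, t) = (0, 1, 0, 0) \<or> (p, r, \<delta>, t) = (0, 1, 0, 1) \<or> (p, r, \<delta>, t) = (0, 1, 0, 2) \<or> (p, r, \<delta>, t) = (0, 5, 0, 4) \<or> (p, r, \<delta>, t) = (0, 5, 0, 5) \<or> (p, r, \<delta>, t) = (0, 5, 0, 6) \<or> (p, r, \<delta>, t) = (1, 0, 0, -1) \<or> (p, r, \<delta>, t) = (1, 0, 0, 0) \<or> (p, r, \<delta>, t) = (5, 0, 0, -1) \<or> (p, r, \<delta>, t) = (5, 0, 0, 0)"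
    by (simp only: insert_iff empty_iff simp_thms)
  then show ?thesis
  proof (elim disjE)
    assume "(p, r, \<delta>, t) = (0, 0, 0, -2)"
    then have "p = 0" "r = 0" "\<delta> = 0" "t = - 2" by simp_all
    then show ?thesis using no_sq[OF Y, where R=221] by simp
  next
    assume "(p, r, \<delta>, t) = (0, 0, 0, -1)"
    then have "p = 0" "r = 0" "\<delta> = 0" "t = - 1" by simp_all
    then show ?thesis using no_sq[OF Y, where R=153] by simp
  next
    assume "(p, r, \<delta>, t) = (0, 0, 0, 0)"
    then have "p = 0" "r = 0" "\<delta> = 0" "t = 0" by simp_all
    then show ?thesis using no_sq[OF Y, where R=86] by simp
  next
    assume "(p, r, \<delta>, t) = (0, 0, 0, 1)"
    then have "p = 0" "r = 0" "\<delta> = 0" "t = 1" by simp_all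
    then have "2*12*N + (-12) = 24 \<or> 2*12*N + (-12) = - 24" using is_sq[OF Y, where R=24] by simp
    then show ?thesis using hN hc \<open>t = 1\<close> \<open>p = 0\<close> \<open>r = 0\<close> \<open>\<delta> = 0\<close> by (simp; presburger?)
  next
    assume "(p, r, \<delta>, t) = (0, 0, 0, 2)"
    then have "p = 0" "r = 0" "\<delta> = 0" "t = 2" by simp_all
    then show ?thesis using no_sq[OF Y, where R=53] by simp
  next
    assume "(p, r, \<delta>, t) = (0, 0, 1, -1)"
    then have "p = 0" "r = 0" "\<delta> = 1" "t = - 1" by simp_all
    then show ?thesis using no_sq[OF Y, where R=153] by simp
  next
    assume "(p, r, \<delta>, t) = (0, 0, 1, 0)"
    then have "p = 0" "r = 0" "\<delta> = 1" "t = 0" by simp_all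
    then show ?thesis using no_sq[OF Y, where R=85] by simp
  next
    assume "(p, r, \<delta>, t) = (0, 0, 1, 1)"
    then have "p = 0" "r = 0" "\<delta> = 1" "t = 1" by simp_all
    then show ?thesis using no_sq[OF Y, where R=19] by simp
  next
    assume "(p, r, \<delta>, t) = (0, 1, 0, 0)"
    then have "p = 0" "r = 1" "\<delta> = 0" "t = 0" by simp_all
    then show ?thesis using no_sq[OF Y, where R=152] by simp
  next
    assume "(p, r, \<delta>, t) = (0, 1, 0, 1)"
    then have "p = 0" "r = 1" "\<delta> = 0" "t = 1" by simp_all
    then show ?thesis using no_sq[OF Y, where R=84] by simp
  next
    assume "(p, r, \<delta>, t) = (0, 1, 0, 2)"
    then have "p = 0" "r = 1" "\<delta> = 0" "t = 2" by simp_all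
    then have "2*12*N + (-8) = 16 \<or> 2*12*N + (-8) = - 16" using is_sq[OF Y, where R=16] by simp
    then show ?thesis using hN hc \<open>t = 2\<close> \<open>p = 0\<close> \<open>r = 1\<close> \<open>\<delta> = 0\<close> by (simp; presburger?)
  next
    assume "(p, r, \<delta>, t) = (0, 5, 0, 4)"
    then have "p = 0" "r = 5" "\<delta> = 0" "t = 4" by simp_all
    then show ?thesis using no_sq[OF Y, where R=152] by simp
  next
    assume "(p, r, \<delta>, t) = (0, 5, 0, 5)"
    then have "p = 0" "r = 5" "\<delta> = 0" "t = 5" by simp_all
    then show ?thesis using no_sq[OF Y, where R=84] by simp
  next
    assume "(p, r, \<delta>, t) = (0, 5, 0, 6)"
    then have "p = 0" "r = 5" "\<delta> = 0" "t = 6" by simp_all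
    then have "2*12*N + (8) = 16 \<or> 2*12*N + (8) = - 16" using is_sq[OF Y, where R=16] by simp
    then show ?thesis using hN hc \<open>t = 6\<close> \<open>p = 0\<close> \<open>r = 5\<close> \<open>\<delta> = 0\<close> by (simp; presburger?)
  next
    assume "(p, r, \<delta>, t) = (1, 0, 0, -1)"
    then have "p = 1" "r = 0" "\<delta> = 0" "t = - 1" by simp_all
    then show ?thesis using no_sq[OF Y, where R=141] by simp
  next
    assume "(p, r, \<delta>, t) = (1, 0, 0, 0)"
    then have "p = 1" "r = 0" "\<delta> = 0" "t = 0" by simp_all
    then show ?thesis using no_sq[OF Y, where R=73] by simp
  next
    assume "(p, r, \<delta>, t) = (5, 0, 0, -1)"
    then have "p = 5" "r = 0" "\<delta> = 0" "t = - 1" by simp_all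
    then have "2*12*N + (-96) = 96 \<or> 2*12*N + (-96) = - 96" using is_sq[OF Y, where R=96] by simp
    then show ?thesis using hN hc \<open>t = - 1\<close> \<open>p = 5\<close> \<open>r = 0\<close> \<open>\<delta> = 0\<close> by (simp; presburger?)
  next
    assume "(p, r, \<delta>, t) = (5, 0, 0, 0)"
    then have "p = 5" "r = 0" "\<delta> = 0" "t = 0" by simp_all
    then show ?thesis using no_sq[OF Y, where R=27] by simp
  qed
qed

lemma solve7:
  fixes p r :: nat and t \<delta> N :: int
  assumes hp: "p \<le> 5" and hr: "r < 7" and hN: "1 \<le> N" and hc: "N \<le> 7*N + t"
    and hd0: "0 \<le> \<delta>" and hd1: "\<delta> \<le> 1"
    and F: "Fp 7 (int p) (int r) t \<delta> N = 0" and G: "Gp 7 (int p) (int r) t \<delta> < 0"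
  shows "(p, r, \<delta>, t, N) \<in> {(0, 1, 0, 2, 2), (5, 0, 0, -1, 16)}"
proof -
  note Y = quadF[OF F[unfolded Fp_def]]
  have B: "int p*(6-int p) < 6 \<and> int r*(7-int r) < 7 \<and> (6*t+int p-6*int r)^2 < 6*(6*7+1)"
    by (rule Gp_bounds[OF G]) (use hp hr in auto)
  have "-16 \<le> 6*t+int p-6*int r \<and> 6*t+int p-6*int r \<le> 16"
    by (rule sq_bound[of _ "6*(6*7+1)"]) (use B in simp_all)
  then have tr: "-3 \<le> t \<and> t \<le> 8" using hp hr by linarith
  have hpp: "p = 0 \<or> p = 1 \<or> p = 5"
  proof -
    have "p = 0 \<or> p = 1 \<or> p = 2 \<or> p = 3 \<or> p = 4 \<or> p = 5" using hp by presburger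
    then show ?thesis using B by auto
  qed
  have hrr: "r = 0 \<or> r = 1 \<or> r = 6"
  proof -
    have "r = 0 \<or> r = 1 \<or> r = 2 \<or> r = 3 \<or> r = 4 \<or> r = 5 \<or> r = 6" using hr by presburger
    then show ?thesis using B by auto
  qed
  have hdd: "\<delta> = 0 \<or> \<delta> = 1" using hd0 hd1 by presburger
  have htt: "t = - 3 \<or> t = - 2 \<or> t = - 1 \<or> t = 0 \<or> t = 1 \<or> t = 2 \<or> t = 3 \<or> t = 4 \<or> t = 5 \<or> t = 6 \<or> t = 7 \<or> t = 8" using tr by presburger
  have C: "(p, r, \<delta>, t) \<in> {(0, 0, 0, -2), (0, 0, 0, -1), (0, 0, 0, 0), (0, 0, 0, 1), (0, 0, 0, 2), (0, 0, 1, -1), (0, 0, 1, 0), (0, 0, 1, 1), (0, 1, 0, 0), (0, 1, 0, 1), (0, 1, 0, 2), (0, 6, 0, 5), (0, 6, 0, 6), (0, 6, 0, 7), (1, 0, 0, -1), (1, 0, 0, 0), (5, 0, 0, -1), (5, 0, 0, 0)}"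
    using hpp hrr hdd htt G by (elim disjE) (simp_all add: Gp_def)
  then have "(p, r, \<delta>, t) = (0, 0, 0, -2) \<or> (p, r, \<delta>, t) = (0, 0, 0, -1) \<or> (p, r, \<delta>, t) = (0, 0, 0, 0) \<or> (p, r, \<delta>, t) = (0, 0, 0, 1) \<or> (p, r, \<delta>, t) = (0, 0, 0, 2) \<or> (p, r, \<delta>, t) = (0, 0, 1, -1) \<or> (p, r, \<delta>, t) = (0, 0, 1, 0) \<or> (p, r, \<delta>, t) = (0, 0, 1, 1) \<or> (p, r, \<delta>, t) = (0, 1, 0, 0) \<or> (p, r, \<delta>, t) = (0, 1, 0, 1) \<or> (p, r, \<delta>, t) = (0, 1, 0, 2) \<or> (p, r, \<delta>, t) = (0, 6, 0, 5) \<or> (p, r, \<delta>, t) = (0, 6, 0, 6) \<or> (p, r, \<delta>, t) = (0, 6, 0, 7) \<or> (p, r, \<delta>, t) = (1, 0, 0, -1) \<or> (p, r, \<delta>, t) = (1, 0, 0, 0) \<or> (p, r, \<delta>, t) = (5, 0, 0, -1) \<or> (p, r, \<delta>, t) = (5, 0, 0, 0)"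
    by (simp only: insert_iff empty_iff simp_thms)
  then show ?thesis
  proof (elim disjE)
    assume "(p, r, \<delta>, t) = (0, 0, 0, -2)"
    then have "p = 0" "r = 0" "\<delta> = 0" "t = - 2" by simp_all
    then show ?thesis using no_sq[OF Y, where R=262] by simp
  next
    assume "(p, r, \<delta>, t) = (0, 0, 0, -1)"
    then have "p = 0" "r = 0" "\<delta> = 0" "t = - 1" by simp_all
    then show ?thesis using no_sq[OF Y, where R=180] by simp
  next
    assume "(p, r, \<delta>, t) = (0, 0, 0, 0)"
    then have "p = 0" "r = 0" "\<delta> = 0" "t = 0" by simp_all
    then show ?thesis using no_sq[OF Y, where R=99] by simp
  next
    assume "(p, r, \<delta>, t) = (0, 0, 0, 1)"
    then have "p = 0" "r = 0" "\<delta> = 0" "t = 1" by simp_all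
    then show ?thesis using no_sq[OF Y, where R=21] by simp
  next
    assume "(p, r, \<delta>, t) = (0, 0, 0, 2)"
    then have "p = 0" "r = 0" "\<delta> = 0" "t = 2" by simp_all
    then show ?thesis using no_sq[OF Y, where R=66] by simp
  next
    assume "(p, r, \<delta>, t) = (0, 0, 1, -1)"
    then have "p = 0" "r = 0" "\<delta> = 1" "t = - 1" by simp_all
    then show ?thesis using no_sq[OF Y, where R=180] by simp
  next
    assume "(p, r, \<delta>, t) = (0, 0, 1, 0)"
    then have "p = 0" "r = 0" "\<delta> = 1" "t = 0" by simp_all
    then show ?thesis using no_sq[OF Y, where R=98] by simp
  next
    assume "(p, r, \<delta>, t) = (0, 0, 1, 1)"
    then have "p = 0" "r = 0" "\<delta> = 1" "t = 1" by simp_all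
    then show ?thesis using no_sq[OF Y, where R=18] by simp
  next
    assume "(p, r, \<delta>, t) = (0, 1, 0, 0)"
    then have "p = 0" "r = 1" "\<delta> = 0" "t = 0" by simp_all
    then show ?thesis using no_sq[OF Y, where R=180] by simp
  next
    assume "(p, r, \<delta>, t) = (0, 1, 0, 1)"
    then have "p = 0" "r = 1" "\<delta> = 0" "t = 1" by simp_all
    then show ?thesis using no_sq[OF Y, where R=98] by simp
  next
    assume "(p, r, \<delta>, t) = (0, 1, 0, 2)"
    then have "p = 0" "r = 1" "\<delta> = 0" "t = 2" by simp_all
    then have "2*7*N + (-12) = 16 \<or> 2*7*N + (-12) = - 16" using is_sq[OF Y, where R=16] by simp
    then show ?thesis using hN hc \<open>t = 2\<close> \<open>p = 0\<close> \<open>r = 1\<close> \<open>\<delta> = 0\<close> by (simp; presburger?)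
  next
    assume "(p, r, \<delta>, t) = (0, 6, 0, 5)"
    then have "p = 0" "r = 6" "\<delta> = 0" "t = 5" by simp_all
    then show ?thesis using no_sq[OF Y, where R=180] by simp
  next
    assume "(p, r, \<delta>, t) = (0, 6, 0, 6)"
    then have "p = 0" "r = 6" "\<delta> = 0" "t = 6" by simp_all
    then show ?thesis using no_sq[OF Y, where R=98] by simp
  next
    assume "(p, r, \<delta>, t) = (0, 6, 0, 7)"
    then have "p = 0" "r = 6" "\<delta> = 0" "t = 7" by simp_all
    then have "2*7*N + (-2) = 16 \<or> 2*7*N + (-2) = - 16" using is_sq[OF Y, where R=16] by simp
    then show ?thesis using hN hc \<open>t = 7\<close> \<open>p = 0\<close> \<open>r = 6\<close> \<open>\<delta> = 0\<close> by (simp; presburger?)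
  next
    assume "(p, r, \<delta>, t) = (1, 0, 0, -1)"
    then have "p = 1" "r = 0" "\<delta> = 0" "t = - 1" by simp_all
    then show ?thesis using no_sq[OF Y, where R=166] by simp
  next
    assume "(p, r, \<delta>, t) = (1, 0, 0, 0)"
    then have "p = 1" "r = 0" "\<delta> = 0" "t = 0" by simp_all
    then show ?thesis using no_sq[OF Y, where R=84] by simp
  next
    assume "(p, r, \<delta>, t) = (5, 0, 0, -1)"
    then have "p = 5" "r = 0" "\<delta> = 0" "t = - 1" by simp_all
    then have "2*7*N + (-112) = 112 \<or> 2*7*N + (-112) = - 112" using is_sq[OF Y, where R=112] by simp
    then show ?thesis using hN hc \<open>t = - 1\<close> \<open>p = 5\<close> \<open>r = 0\<close> \<open>\<delta> = 0\<close> by (simp; presburger?)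
  next
    assume "(p, r, \<delta>, t) = (5, 0, 0, 0)"
    then have "p = 5" "r = 0" "\<delta> = 0" "t = 0" by simp_all
    then show ?thesis using no_sq[OF Y, where R=29] by simp
  qed
qed

lemma solve8:
  fixes p r :: nat and t \<delta> N :: int
  assumes hp: "p \<le> 5" and hr: "r < 8" and hN: "1 \<le> N" and hc: "N \<le> 8*N + t"
    and hd0: "0 \<le> \<delta>" and hd1: "\<delta> \<le> 1"
    and F: "Fp 8 (int p) (int r) t \<delta> N = 0" and G: "Gp 8 (int p) (int r) t \<delta> < 0"
  shows "(p, r, \<delta>, t, N) \<in> {}"
proof -
  note Y = quadF[OF F[unfolded Fp_def]]
  have B: "int p*(6-int p) < 6 \<and> int r*(8-int r) < 8 \<and> (6*t+int p-6*int r)^2 < 6*(6*8+1)"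
    by (rule Gp_bounds[OF G]) (use hp hr in auto)
  have "-17 \<le> 6*t+int p-6*int r \<and> 6*t+int p-6*int r \<le> 17"
    by (rule sq_bound[of _ "6*(6*8+1)"]) (use B in simp_all)
  then have tr: "-3 \<le> t \<and> t \<le> 9" using hp hr by linarith
  have hpp: "p = 0 \<or> p = 1 \<or> p = 5"
  proof -
    have "p = 0 \<or> p = 1 \<or> p = 2 \<or> p = 3 \<or> p = 4 \<or> p = 5" using hp by presburger
    then show ?thesis using B by auto
  qed
  have hrr: "r = 0 \<or> r = 1 \<or> r = 7"
  proof -
    have "r = 0 \<or> r = 1 \<or> r = 2 \<or> r = 3 \<or> r = 4 \<or> r = 5 \<or> r = 6 \<or> r = 7" using hr by presburger
    then show ?thesis using B by auto
  qed
  have hdd: "\<delta> = 0 \<or> \<delta> = 1" using hd0 hd1 by presburger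
  have htt: "t = - 3 \<or> t = - 2 \<or> t = - 1 \<or> t = 0 \<or> t = 1 \<or> t = 2 \<or> t = 3 \<or> t = 4 \<or> t = 5 \<or> t = 6 \<or> t = 7 \<or> t = 8 \<or> t = 9" using tr by presburger
  have C: "(p, r, \<delta>, t) \<in> {(0, 0, 0, -2), (0, 0, 0, -1), (0, 0, 0, 0), (0, 0, 0, 1), (0, 0, 0, 2), (0, 0, 1, -2), (0, 0, 1, -1), (0, 0, 1, 0), (0, 0, 1, 1), (0, 0, 1, 2), (0, 1, 0, 0), (0, 1, 0, 1), (0, 1, 0, 2), (0, 7, 0, 6), (0, 7, 0, 7), (0, 7, 0, 8), (1, 0, 0, -1), (1, 0, 0, 0), (5, 0, 0, -1), (5, 0, 0, 0)}"
    using hpp hrr hdd htt G by (elim disjE) (simp_all add: Gp_def)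
  then have "(p, r, \<delta>, t) = (0, 0, 0, -2) \<or> (p, r, \<delta>, t) = (0, 0, 0, -1) \<or> (p, r, \<delta>, t) = (0, 0, 0, 0) \<or> (p, r, \<delta>, t) = (0, 0, 0, 1) \<or> (p, r, \<delta>, t) = (0, 0, 0, 2) \<or> (p, r, \<delta>, t) = (0, 0, 1, -2) \<or> (p, r, \<delta>, t) = (0, 0, 1, -1) \<or> (p, r, \<delta>, t) = (0, 0, 1, 0) \<or> (p, r, \<delta>, t) = (0, 0, 1, 1) \<or> (p, r, \<delta>, t) = (0, 0, 1, 2) \<or> (p, r, \<delta>, t) = (0, 1, 0, 0) \<or> (p, r, \<delta>, t) = (0, 1, 0, 1) \<or> (p, r, \<delta>, t) = (0, 1, 0, 2) \<or> (p, r, \<delta>, t) = (0, 7, 0, 6) \<or> (p, r, \<delta>, t) = (0, 7, 0, 7) \<or> (p, r, \<delta>, t) = (0, 7, 0, 8) \<or> (p, r, \<delta>, t) = (1, 0, 0, -1) \<or> (p, r, \<delta>, t) = (1, 0, 0, 0) \<or> (p, r, \<delta>, t) = (5, 0, 0, -1) \<or> (p, r, \<delta>, t) = (5, 0, 0, 0)"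
    by (simp only: insert_iff empty_iff simp_thms)
  then show ?thesis
  proof (elim disjE)
    assume "(p, r, \<delta>, t) = (0, 0, 0, -2)"
    then have "p = 0" "r = 0" "\<delta> = 0" "t = - 2" by simp_all
    then show ?thesis using F hN hc by (simp add: Fp_def; presburger?)
  next
    assume "(p, r, \<delta>, t) = (0, 0, 0, -1)"
    then have "p = 0" "r = 0" "\<delta> = 0" "t = - 1" by simp_all
    then show ?thesis using F hN hc by (simp add: Fp_def; presburger?)
  next
    assume "(p, r, \<delta>, t) = (0, 0, 0, 0)"
    then have "p = 0" "r = 0" "\<delta> = 0" "t = 0" by simp_all
    then show ?thesis using F hN hc by (simp add: Fp_def; presburger?)
  next
    assume "(p, r, \<delta>, t) = (0, 0, 0, 1)"
    then have "p = 0" "r = 0" "\<delta> = 0" "t = 1" by simp_all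
    then show ?thesis using F hN hc by (simp add: Fp_def; presburger?)
  next
    assume "(p, r, \<delta>, t) = (0, 0, 0, 2)"
    then have "p = 0" "r = 0" "\<delta> = 0" "t = 2" by simp_all
    then show ?thesis using F hN hc by (simp add: Fp_def; presburger?)
  next
    assume "(p, r, \<delta>, t) = (0, 0, 1, -2)"
    then have "p = 0" "r = 0" "\<delta> = 1" "t = - 2" by simp_all
    then show ?thesis using F hN hc by (simp add: Fp_def; presburger?)
  next
    assume "(p, r, \<delta>, t) = (0, 0, 1, -1)"
    then have "p = 0" "r = 0" "\<delta> = 1" "t = - 1" by simp_all
    then show ?thesis using F hN hc by (simp add: Fp_def; presburger?)
  next
    assume "(p, r, \<delta>, t) = (0, 0, 1, 0)"
    then have "p = 0" "r = 0" "\<delta> = 1" "t = 0" by simp_all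
    then show ?thesis using F hN hc by (simp add: Fp_def; presburger?)
  next
    assume "(p, r, \<delta>, t) = (0, 0, 1, 1)"
    then have "p = 0" "r = 0" "\<delta> = 1" "t = 1" by simp_all
    then show ?thesis using F hN hc by (simp add: Fp_def; presburger?)
  next
    assume "(p, r, \<delta>, t) = (0, 0, 1, 2)"
    then have "p = 0" "r = 0" "\<delta> = 1" "t = 2" by simp_all
    then show ?thesis using F hN hc by (simp add: Fp_def; presburger?)
  next
    assume "(p, r, \<delta>, t) = (0, 1, 0, 0)"
    then have "p = 0" "r = 1" "\<delta> = 0" "t = 0" by simp_all
    then show ?thesis using F hN hc by (simp add: Fp_def; presburger?)
  next
    assume "(p, r, \<delta>, t) = (0, 1, 0, 1)"
    then have "p = 0" "r = 1" "\<delta> = 0" "t = 1" by simp_all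
    then show ?thesis using F hN hc by (simp add: Fp_def; presburger?)
  next
    assume "(p, r, \<delta>, t) = (0, 1, 0, 2)"
    then have "p = 0" "r = 1" "\<delta> = 0" "t = 2" by simp_all
    then show ?thesis using F hN hc by (simp add: Fp_def; presburger?)
  next
    assume "(p, r, \<delta>, t) = (0, 7, 0, 6)"
    then have "p = 0" "r = 7" "\<delta> = 0" "t = 6" by simp_all
    then show ?thesis using F hN hc by (simp add: Fp_def; presburger?)
  next
    assume "(p, r, \<delta>, t) = (0, 7, 0, 7)"
    then have "p = 0" "r = 7" "\<delta> = 0" "t = 7" by simp_all
    then show ?thesis using F hN hc by (simp add: Fp_def; presburger?)
  next
    assume "(p, r, \<delta>, t) = (0, 7, 0, 8)"
    then have "p = 0" "r = 7" "\<delta> = 0" "t = 8" by simp_all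
    then show ?thesis using F hN hc by (simp add: Fp_def; presburger?)
  next
    assume "(p, r, \<delta>, t) = (1, 0, 0, -1)"
    then have "p = 1" "r = 0" "\<delta> = 0" "t = - 1" by simp_all
    then show ?thesis using F hN hc by (simp add: Fp_def; presburger?)
  next
    assume "(p, r, \<delta>, t) = (1, 0, 0, 0)"
    then have "p = 1" "r = 0" "\<delta> = 0" "t = 0" by simp_all
    then show ?thesis using F hN hc by (simp add: Fp_def; presburger?)
  next
    assume "(p, r, \<delta>, t) = (5, 0, 0, -1)"
    then have "p = 5" "r = 0" "\<delta> = 0" "t = - 1" by simp_all
    then show ?thesis using F hN hc by (simp add: Fp_def; presburger?)
  next
    assume "(p, r, \<delta>, t) = (5, 0, 0, 0)"
    then have "p = 5" "r = 0" "\<delta> = 0" "t = 0" by simp_all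
    then show ?thesis using F hN hc by (simp add: Fp_def; presburger?)
  qed
qed



definition cstep :: "int \<times> int list \<Rightarrow> int \<times> int list" where
  "cstep t = cremona_transform (fst t) (rev (sort (snd t)))"

lemma len_ct: "length (snd (cremona_transform \<delta> l)) = length l"
  by (cases "(\<delta>, l)" rule: cremona_transform.cases) auto

lemma move_step: "length (snd t) \<ge> 3 \<Longrightarrow> cremona_move t (cstep t)"
  unfolding cremona_move_def cstep_def
  by (intro conjI exI[of _ "rev (sort (snd t))"]) (simp_all add: sorted_wrt_rev)

lemma len_cstep: "length (snd (cstep t)) = length (snd t)"
  by (simp add: cstep_def len_ct)

lemma chain: "length (snd t) \<ge> 3 \<Longrightarrow> cremona_move\<^sup>*\<^sup>* t ((cstep ^^ n) t)"
proof (induction n)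
  case 0
  then show ?case by simp
next
  case (Suc n)
  have "length (snd ((cstep ^^ n) t)) \<ge> 3" using Suc.prems
    by (induction n) (simp_all add: len_cstep)
  then have "cremona_move ((cstep ^^ n) t) ((cstep ^^ Suc n) t)" by (simp add: move_step)
  with Suc show ?case by simp
qed

lemma final_step:
  assumes "take 3 (rev (sort l)) = [0, 0, 0]" "sort l' = sort l"
  shows "cremona_move (0, l) (0, l')"
proof -
  define ns where "ns = rev (sort l)"
  have ln: "length ns \<ge> 3" using arg_cong[OF assms(1), of length] by (simp add: ns_def)
  then obtain a b c rest where nsf: "ns = a # b # c # rest"
    by (metis Suc_le_length_iff numeral_3_eq_3)
  with assms(1) have abc: "a = 0" "b = 0" "c = 0" by (simp_all add: ns_def[symmetric])
  have ms: "mset l' = mset l" using assms(2) by (metis mset_sort)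
  have "length l \<ge> 3" using ln by (simp add: ns_def)
  moreover have "mset ns = mset l" "sorted_wrt (\<ge>) ns" by (simp_all add: ns_def sorted_wrt_rev)
  moreover have "cremona_transform 0 ns = (0, ns)" by (simp add: nsf abc)
  ultimately show ?thesis unfolding cremona_move_def using ms
    by (intro conjI exI[of _ ns]) simp_all
qed

lemma E_intro:
  assumes "d \<ge> 0" "e \<ge> 0" "m \<noteq> []" "sorted_wrt (\<ge>) m" "\<forall>x\<in>set m. x \<ge> 0"
    "sum_list m = 2 * (d + e) - 1" "sum_list (map (\<lambda>x. x^2) m) = 2 * d * e + 1"
    "(cstep ^^ n) (d + e - hd m, (d - hd m) # (e - hd m) # tl m) = (0, l)"
    "take 3 (rev (sort l)) = [0, 0, 0]" "sort ((-1) # replicate (length m) 0) = sort l"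
    "length m \<ge> 2"
  shows "(d, e, m) \<in> E"
proof -
  have "cremona_move\<^sup>*\<^sup>* (d + e - hd m, (d - hd m) # (e - hd m) # tl m) (0, l)"
    using chain[of "(d + e - hd m, (d - hd m) # (e - hd m) # tl m)" n] assms(8,11) by simp
  moreover have "cremona_move (0, l) (0, (-1) # replicate (length m) 0)"
    by (rule final_step[OF assms(9,10)])
  ultimately have "cremona_move\<^sup>*\<^sup>* (d + e - hd m, (d - hd m) # (e - hd m) # tl m) (0, (-1) # replicate (length m) 0)"
    by simp
  then show ?thesis using assms unfolding E_def by simp
qed




definition closedS :: "(int \<times> int list \<times> int list) list \<Rightarrow> bool" where
  "closedS S = (\<forall>(\<delta>, Pf, Q) \<in> set S. length Pf \<ge> 3 \<and> sorted_wrt (\<ge>) Pf \<and> (\<forall>x\<in>set Pf. x \<ge> 0)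
      \<and> sorted_wrt (\<ge>) Q \<and> (\<forall>y\<in>set Q. y \<le> 0)
      \<and> (\<exists>(\<delta>', Pf', Q') \<in> set S. \<delta>' = 2*\<delta> - Pf!0 - Pf!1 - Pf!2 \<and>
           sort (Pf' @ Q') = sort ((\<delta> - Pf!1 - Pf!2) # (\<delta> - Pf!0 - Pf!2) # (\<delta> - Pf!0 - Pf!1) # drop 3 Pf @ Q)))"

definition InvS :: "(int \<times> int list \<times> int list) list \<Rightarrow> nat \<Rightarrow> int \<times> int list \<Rightarrow> bool" where
  "InvS S z t = (\<exists>(\<delta>, Pf, Q) \<in> set S. fst t = \<delta> \<and> mset (snd t) = mset (Pf @ Q) + replicate_mset z 0)"

lemma mset_sort_eq: "sort A = sort B \<Longrightarrow> mset A = mset B"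
  by (metis mset_sort)

lemma inv_step:
  assumes cl: "closedS S" and inv: "InvS S z t" and mv: "cremona_move t t'"
  shows "InvS S z t'"
proof -
  from inv obtain \<delta> Pf Q where mem: "(\<delta>, Pf, Q) \<in> set S" and f: "fst t = \<delta>"
    and ms: "mset (snd t) = mset (Pf @ Q) + replicate_mset z 0" unfolding InvS_def by auto
  from cl mem have l3: "length Pf \<ge> 3" and sPf: "sorted_wrt (\<ge>) Pf" and nPf: "\<forall>x\<in>set Pf. x \<ge> 0"
    and sQ: "sorted_wrt (\<ge>) Q" and nQ: "\<forall>y\<in>set Q. y \<le> 0"
    and nx: "\<exists>(\<delta>', Pf', Q') \<in> set S. \<delta>' = 2*\<delta> - Pf!0 - Pf!1 - Pf!2 \<and>
           sort (Pf' @ Q') = sort ((\<delta> - Pf!1 - Pf!2) # (\<delta> - Pf!0 - Pf!2) # (\<delta> - Pf!0 - Pf!1) # drop 3 Pf @ Q)"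
    unfolding closedS_def by auto
  from mv obtain ns where ns: "mset ns = mset (snd t)" "sorted_wrt (\<ge>) ns"
    "fst t' = fst (cremona_transform (fst t) ns)"
    "mset (snd t') = mset (snd (cremona_transform (fst t) ns))"
    unfolding cremona_move_def by auto
  define L where "L = Pf @ replicate z 0 @ Q"
  have srep: "sorted_wrt (\<ge>) (replicate z (0::int))" by (induction z) auto
  have PQ: "\<forall>x\<in>set Pf. \<forall>y\<in>set Q. y \<le> x" using nPf nQ by fastforce
  have sL: "sorted_wrt (\<ge>) L" unfolding L_def using sPf sQ nPf nQ srep PQ
    by (auto simp: sorted_wrt_append)
  have mL: "mset L = mset (snd t)" unfolding L_def ms by simp
  have nsL: "ns = L" by (rule sorted_desc_unique) (use ns mL sL in simp_all)
  obtain a b c P where Pf: "Pf = a # b # c # P" using l3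
    by (metis Suc_le_length_iff numeral_3_eq_3)
  have ct: "cremona_transform \<delta> ns = (2*\<delta> - a - b - c, (\<delta> - b - c) # (\<delta> - a - c) # (\<delta> - a - b) # P @ replicate z 0 @ Q)"
    by (simp add: nsL L_def Pf)
  from nx obtain \<delta>' Pf' Q' where mem': "(\<delta>', Pf', Q') \<in> set S" and d': "\<delta>' = 2*\<delta> - a - b - c"
    and so: "sort (Pf' @ Q') = sort ((\<delta> - b - c) # (\<delta> - a - c) # (\<delta> - a - b) # P @ Q)"
    by (auto simp: Pf)
  have "fst t' = \<delta>'" using ns(3) f ct d' by simp
  moreover have "mset (snd t') = mset (Pf' @ Q') + replicate_mset z 0"
    using ns(4) f ct mset_sort_eq[OF so] by simp
  ultimately show ?thesis unfolding InvS_def using mem' by auto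
qed

lemma inv_reach:
  assumes cl: "closedS S" and r: "cremona_move\<^sup>*\<^sup>* t0 t" and i0: "InvS S z t0"
  shows "InvS S z t"
  using r i0 by (induction rule: rtranclp_induct) (auto intro: inv_step[OF cl])

definition S16 :: "(int \<times> int list \<times> int list) list" where
  "S16 = [(23, [9,9,9,9,9,7,7,3,3,3], []), (19, [9,9,7,7,5,5,5,3,3,3], []),
          (13, [7,5,5,5,3,3,3,3,3,1], []), (9, [5,3,3,3,3,3,3,1,1,1], []),
          (7, [3,3,3,3,3,1,1,1,1,1], []), (5, [3,3,1,1,1,1,1,1,1,1], []),
          (3, [1,1,1,1,1,1,1,1,1], [-1])]"

definition S25 :: "(int \<times> int list \<times> int list) list" where
  "S25 = [(36, [14,14,14,14,14,11,11,5,5,5], []), (30, [14,14,11,11,8,8,8,5,5,5], []),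
          (21, [11,8,8,8,5,5,5,5,5,2], []), (15, [8,5,5,5,5,5,5,2,2,2], []),
          (12, [5,5,5,5,5,2,2,2,2,2], []), (9, [5,5,2,2,2,2,2,2,2,2], []),
          (6, [2,2,2,2,2,2,2,2,2], [-1])]"

lemma closed16: "closedS S16"
  by (simp add: closedS_def S16_def numeral_eq_Suc)

lemma closed25: "closedS S25"
  by (simp add: closedS_def S25_def numeral_eq_Suc)

lemma not_E_gen:
  assumes cl: "closedS S" and m: "m = X @ replicate z 0" and X: "X \<noteq> []"
    and st: "(d + e - hd X, X', []) \<in> set S" and X': "sort X' = sort ((d - hd X) # (e - hd X) # tl X)"
    and nz: "\<forall>(\<delta>, Pf, Q) \<in> set S. \<delta> \<noteq> 0" and d0: "d \<noteq> 0"
  shows "(d, e, m) \<notin> E"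
proof
  assume "(d, e, m) \<in> E"
  then have r: "cremona_move\<^sup>*\<^sup>* (d + e - hd m, (d - hd m) # (e - hd m) # tl m) (0, (-1) # replicate (length m) 0)"
    unfolding E_def using d0 by auto
  have hm: "hd m = hd X" "tl m = tl X @ replicate z 0" using X m by (cases X; simp)+
  have "InvS S z (d + e - hd m, (d - hd m) # (e - hd m) # tl m)"
    unfolding InvS_def using st hm mset_sort_eq[OF X'] by (intro bexI[OF _ st]) simp
  from inv_reach[OF cl r this] nz show False unfolding InvS_def by auto
qed

lemma not16: "(16, 16, (replicate 6 9 @ replicate 3 3) @ replicate z 0) \<notin> E"
  by (rule not_E_gen[OF closed16, where X = "replicate 6 9 @ replicate 3 3" and X' = "[9,9,9,9,9,7,7,3,3,3]"]) (simp_all add: S16_def numeral_eq_Suc)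

lemma not25: "(25, 25, (replicate 6 14 @ replicate 3 5) @ replicate z 0) \<notin> E"
  by (rule not_E_gen[OF closed25, where X = "replicate 6 14 @ replicate 3 5" and X' = "[14,14,14,14,14,11,11,5,5,5]"]) (simp_all add: S25_def numeral_eq_Suc)




lemma filter_pos_zeros: "\<forall>x\<in>set A. (x::int) > 0 \<Longrightarrow> filter (\<lambda>x. x > 0) (A @ replicate z 0) = A"
  by (induction z) (simp_all add: filter_empty_conv)

lemma good_elim:
  assumes k: "k \<ge> 1" and x: "x \<in> good_classes k"
  shows "\<exists>c N t p r z d e. x = (d, e, replicate p (c+1) @ replicate (6-p) c @ replicate r (N+1) @ replicate (k-r) N)
     \<and> (d, e, (replicate p (c+1) @ replicate (6-p) c @ replicate r (N+1) @ replicate (k-r) N) @ replicate z 0) \<in> E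
     \<and> p \<le> 5 \<and> r < k \<and> 1 \<le> N \<and> N \<le> int k * N + t \<and> 0 \<le> d - e \<and> d - e \<le> 1 \<and> c = int k * N + t
     \<and> 2*(d+e) = 7*int k*N + 6*t + int p + int r + 1
     \<and> Fp (int k) (int p) (int r) t (d-e) N = 0 \<and> Gp (int k) (int p) (int r) t (d-e) < 0"
proof -
  from x obtain d e m where x: "x = (d, e, filter (\<lambda>x. x > 0) m)" and E: "(d, e, m) \<in> E" and de: "e \<le> d"
    and lm: "l_m m = l_a (6 + 1 / of_nat k)"
    and mu: "sqrt (real_of_rat (6 + 1 / of_nat k) / 2) < real_of_rat (mu (d, e, m) (6 + 1 / of_nat k))"
    unfolding good_classes_def Let_def by blast
  from classify[OF k E de lm mu] obtain c N t p r z where H: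
    "m = (replicate p (c+1) @ replicate (6-p) c @ replicate r (N+1) @ replicate (k-r) N) @ replicate z 0"
    "p \<le> 5" "r < k" "N \<ge> 1" "N \<le> c" "d - e \<le> 1" "c = int k * N + t"
    "2*(d+e) = 7*int k*N + 6*t + int p + int r + 1"
    "Fp (int k) (int p) (int r) t (d-e) N = 0" "Gp (int k) (int p) (int r) t (d-e) < 0"
    by blast
  have pos: "\<forall>x\<in>set (replicate p (c+1) @ replicate (6-p) c @ replicate r (N+1) @ replicate (k-r) N). x > 0"
    using H by auto
  show ?thesis
    apply (rule exI[of _ c], rule exI[of _ N], rule exI[of _ t], rule exI[of _ p], rule exI[of _ r], rule exI[of _ z],
           rule exI[of _ d], rule exI[of _ e])
    using H E de x filter_pos_zeros[OF pos, of z] by simp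
qed

lemma mu_val:
  assumes k: "k \<ge> 1" and lm: "length m = 6 + k"
  shows "mu (d, e, m) (6 + 1 / of_nat k) =
     (of_int (sum_list (take 6 m)) + of_int (sum_list (drop 6 m)) / of_nat k) / of_int (d + e)"
proof -
  have lT: "length (take 6 m) = 6" and lU: "length (drop 6 m) = k" using lm by simp_all
  have "zip m (wexp (6 + 1 / of_nat k)) = zip (take 6 m) (replicate 6 1) @ zip (drop 6 m) (replicate k (1 / of_nat k))"
  proof -
    have "zip (take 6 m @ drop 6 m) (replicate 6 1 @ replicate k (1 / of_nat k)) =
      zip (take 6 m) (replicate 6 1) @ zip (drop 6 m) (replicate k (1 / of_nat k))"
      by (rule zip_append) (use lm in simp)
    then show ?thesis unfolding wexp_6k[OF k] by simp
  qed
  then show ?thesis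
    unfolding mu_def using dot_rep[OF lT, of 1] dot_rep[OF lU, of "1 / of_nat k"] by simp
qed

lemma sqrt_lt: "x < y^2 \<Longrightarrow> 0 \<le> y \<Longrightarrow> sqrt x < (y::real)"
  using real_sqrt_less_mono[of x "y^2"] by simp

lemma mem_good:
  assumes k: "k \<ge> 1" and E: "(d, e, m) \<in> E" and de: "e \<le> d" and pos: "\<forall>x\<in>set m. x > 0"
    and lm: "length m = 6 + k"
    and hA: "sum_list (take 6 m) = A" and hB: "sum_list (drop 6 m) = B"
    and ineq: "int k * (6 * int k + 1) * (d + e)^2 < 2 * (int k * A + B)^2"
    and A0: "0 \<le> A" and B0: "0 \<le> B" and s0: "0 < d + e"
  shows "(d, e, m) \<in> good_classes k"
proof -
  have f: "filter (\<lambda>x. x > 0) m = m" using pos by simp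
  have la: "l_a (6 + 1 / of_nat k) = 6 + k" by (simp add: l_a_def wexp_6k[OF k])
  have lmm: "l_m m = 6 + k" using f lm by (simp add: l_m_def)
  define kk where "kk = real k"
  define S where "S = real_of_int (d + e)"
  define X where "X = kk * real_of_int A + real_of_int B"
  have kk0: "kk > 0" using k by (simp add: kk_def)
  have S0: "S > 0" using s0 by (simp add: S_def)
  have r1: "real_of_rat (6 + 1 / of_nat k) = 6 + 1 / kk" by (simp add: of_rat_add of_rat_divide kk_def)
  have r2: "real_of_rat (mu (d, e, m) (6 + 1 / of_nat k)) = (real_of_int A + real_of_int B / kk) / S"
    by (simp add: mu_val[OF k lm] of_rat_add of_rat_divide hA hB kk_def S_def)
  have ri: "kk * (6 * kk + 1) * S^2 < 2 * X^2"
  proof -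
    have "real_of_int (int k * (6 * int k + 1) * (d + e)^2) < real_of_int (2 * (int k * A + B)^2)"
      using ineq by linarith
    then show ?thesis by (simp add: kk_def S_def X_def)
  qed
  have pos2: "2 * kk^2 * S^2 > 0" using kk0 S0 by simp
  have e1: "(6 + 1 / kk) / 2 = (kk * (6 * kk + 1) * S^2) / (2 * kk^2 * S^2)"
    using kk0 S0 by (simp add: field_simps power2_eq_square)
  have e2: "((real_of_int A + real_of_int B / kk) / S)^2 = (2 * X^2) / (2 * kk^2 * S^2)"
    using kk0 S0 by (simp add: field_simps power2_eq_square X_def)
  have "(6 + 1 / kk) / 2 < ((real_of_int A + real_of_int B / kk) / S)^2"
    unfolding e1 e2 using ri pos2 by (rule divide_strict_right_mono)
  moreover have "0 \<le> (real_of_int A + real_of_int B / kk) / S" using A0 B0 kk0 S0 by simp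
  ultimately have "sqrt (real_of_rat (6 + 1 / of_nat k) / 2) < real_of_rat (mu (d, e, m) (6 + 1 / of_nat k))"
    unfolding r1 r2 by (rule sqrt_lt)
  then show ?thesis unfolding good_classes_def Let_def mem_Collect_eq
    apply (rule_tac x=d in exI, rule_tac x=e in exI, rule_tac x=m in exI)
    using E de la lmm f by simp
qed


lemma mem1_0: "(4::int, 4::int, [3] @ replicate 6 2) \<in> good_classes 1"
proof (rule mem_good[where A = 13 and B = 2])
  show "(4::int, 4::int, [3] @ replicate 6 2) \<in> E"
    by (rule E_intro[where n=4]) (simp_all add: cstep_def numeral_eq_Suc)+
qed (simp_all add: numeral_eq_Suc)

lemma gc1: "good_classes 1 = {(4, 4, [3] @ replicate 6 2)}"
proof (rule set_eqI, rule iffI)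
  fix x :: "int \<times> int \<times> int list" assume "x \<in> good_classes 1"
  from good_elim[OF _ this] obtain c N t p r z d e where H:
    "x = (d, e, replicate p (c+1) @ replicate (6-p) c @ replicate r (N+1) @ replicate (1-r) N)"
    "(d, e, (replicate p (c+1) @ replicate (6-p) c @ replicate r (N+1) @ replicate (1-r) N) @ replicate z 0) \<in> E"
    "p \<le> 5" "r < 1" "1 \<le> N" "N \<le> int 1 * N + t" "0 \<le> d - e" "d - e \<le> 1" "c = int 1 * N + t"
    "2*(d+e) = 7*int 1*N + 6*t + int p + int r + 1"
    "Fp (int 1) (int p) (int r) t (d-e) N = 0" "Gp (int 1) (int p) (int r) t (d-e) < 0"
    by auto
  have S: "(p, r, d - e, t, N) \<in> {(1, 0, 0, 0, 2)}" by (rule solve1) (use H in simp_all)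
  then have "(p, r, d - e, t, N) = (1, 0, 0, 0, 2) \<or> False" by (simp only: insert_iff empty_iff)
  then show "x \<in> {(4, 4, [3] @ replicate 6 2)}"
  proof (elim disjE)
    assume "(p, r, d - e, t, N) = (1, 0, 0, 0, 2)"
    then have cs: "p = 1" "r = 0" "d - e = 0" "t = 0" "N = 2" by simp_all
    have "c = 2" using H(9) cs by simp
    have "2*(d+e) = 16" using H(10) cs by simp
    then have "d = 4" using cs(3) by presburger
    have "e = 4" using \<open>2*(d+e) = 16\<close> cs(3) by presburger
    then show ?thesis using H(1) cs \<open>c = 2\<close> \<open>d = 4\<close> \<open>e = 4\<close> by (simp add: numeral_eq_Suc)
  next
    assume False then show ?thesis by simp
  qed
next
  fix x :: "int \<times> int \<times> int list" assume "x \<in> {(4, 4, [3] @ replicate 6 2)}"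
  then show "x \<in> good_classes 1" using mem1_0 by auto
qed

lemma mem2_0: "(9::int, 9::int, replicate 6 5 @ [3, 2]) \<in> good_classes 2"
proof (rule mem_good[where A = 30 and B = 5])
  show "(9::int, 9::int, replicate 6 5 @ [3, 2]) \<in> E"
    by (rule E_intro[where n=7]) (simp_all add: cstep_def numeral_eq_Suc)+
qed (simp_all add: numeral_eq_Suc)

lemma gc2: "good_classes 2 = {(9, 9, replicate 6 5 @ [3, 2])}"
proof (rule set_eqI, rule iffI)
  fix x :: "int \<times> int \<times> int list" assume "x \<in> good_classes 2"
  from good_elim[OF _ this] obtain c N t p r z d e where H:
    "x = (d, e, replicate p (c+1) @ replicate (6-p) c @ replicate r (N+1) @ replicate (2-r) N)"
    "(d, e, (replicate p (c+1) @ replicate (6-p) c @ replicate r (N+1) @ replicate (2-r) N) @ replicate z 0) \<in> E"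
    "p \<le> 5" "r < 2" "1 \<le> N" "N \<le> int 2 * N + t" "0 \<le> d - e" "d - e \<le> 1" "c = int 2 * N + t"
    "2*(d+e) = 7*int 2*N + 6*t + int p + int r + 1"
    "Fp (int 2) (int p) (int r) t (d-e) N = 0" "Gp (int 2) (int p) (int r) t (d-e) < 0"
    by auto
  have S: "(p, r, d - e, t, N) \<in> {(0, 1, 0, 1, 2)}" by (rule solve2) (use H in simp_all)
  then have "(p, r, d - e, t, N) = (0, 1, 0, 1, 2) \<or> False" by (simp only: insert_iff empty_iff)
  then show "x \<in> {(9, 9, replicate 6 5 @ [3, 2])}"
  proof (elim disjE)
    assume "(p, r, d - e, t, N) = (0, 1, 0, 1, 2)"
    then have cs: "p = 0" "r = 1" "d - e = 0" "t = 1" "N = 2" by simp_all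
    have "c = 5" using H(9) cs by simp
    have "2*(d+e) = 36" using H(10) cs by simp
    then have "d = 9" using cs(3) by presburger
    have "e = 9" using \<open>2*(d+e) = 36\<close> cs(3) by presburger
    then show ?thesis using H(1) cs \<open>c = 5\<close> \<open>d = 9\<close> \<open>e = 9\<close> by (simp add: numeral_eq_Suc)
  next
    assume False then show ?thesis by simp
  qed
next
  fix x :: "int \<times> int \<times> int list" assume "x \<in> {(9, 9, replicate 6 5 @ [3, 2])}"
  then show "x \<in> good_classes 2" using mem2_0 by auto
qed

lemma mem3_0: "(7::int, 7::int, replicate 6 4 @ replicate 3 1) \<in> good_classes 3"
proof (rule mem_good[where A = 24 and B = 3])
  show "(7::int, 7::int, replicate 6 4 @ replicate 3 1) \<in> E"
    by (rule E_intro[where n=6]) (simp_all add: cstep_def numeral_eq_Suc)+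
qed (simp_all add: numeral_eq_Suc)

lemma gc3: "good_classes 3 = {(7, 7, replicate 6 4 @ replicate 3 1)}"
proof (rule set_eqI, rule iffI)
  fix x :: "int \<times> int \<times> int list" assume "x \<in> good_classes 3"
  from good_elim[OF _ this] obtain c N t p r z d e where H:
    "x = (d, e, replicate p (c+1) @ replicate (6-p) c @ replicate r (N+1) @ replicate (3-r) N)"
    "(d, e, (replicate p (c+1) @ replicate (6-p) c @ replicate r (N+1) @ replicate (3-r) N) @ replicate z 0) \<in> E"
    "p \<le> 5" "r < 3" "1 \<le> N" "N \<le> int 3 * N + t" "0 \<le> d - e" "d - e \<le> 1" "c = int 3 * N + t"
    "2*(d+e) = 7*int 3*N + 6*t + int p + int r + 1"
    "Fp (int 3) (int p) (int r) t (d-e) N = 0" "Gp (int 3) (int p) (int r) t (d-e) < 0"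
    by auto
  have S: "(p, r, d - e, t, N) \<in> {(0, 0, 0, -1, 5), (0, 0, 0, 0, 3), (0, 0, 0, 1, 1)}" by (rule solve3) (use H in simp_all)
  then have "(p, r, d - e, t, N) = (0, 0, 0, -1, 5) \<or> (p, r, d - e, t, N) = (0, 0, 0, 0, 3) \<or> (p, r, d - e, t, N) = (0, 0, 0, 1, 1) \<or> False" by (simp only: insert_iff empty_iff)
  then show "x \<in> {(7, 7, replicate 6 4 @ replicate 3 1)}"
  proof (elim disjE)
    assume "(p, r, d - e, t, N) = (0, 0, 0, -1, 5)"
    then have cs: "p = 0" "r = 0" "d - e = 0" "t = - 1" "N = 5" by simp_all
    have "c = 14" using H(9) cs by simp
    have "2*(d+e) = 100" using H(10) cs by simp
    then have "d = 25" using cs(3) by presburger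
    have "e = 25" using \<open>2*(d+e) = 100\<close> cs(3) by presburger
    then have False using H(2) cs \<open>c = 14\<close> \<open>d = 25\<close> \<open>e = 25\<close> not25[of z] by simp
    then show ?thesis ..
  next
    assume "(p, r, d - e, t, N) = (0, 0, 0, 0, 3)"
    then have cs: "p = 0" "r = 0" "d - e = 0" "t = 0" "N = 3" by simp_all
    have "c = 9" using H(9) cs by simp
    have "2*(d+e) = 64" using H(10) cs by simp
    then have "d = 16" using cs(3) by presburger
    have "e = 16" using \<open>2*(d+e) = 64\<close> cs(3) by presburger
    then have False using H(2) cs \<open>c = 9\<close> \<open>d = 16\<close> \<open>e = 16\<close> not16[of z] by simp
    then show ?thesis ..
  next
    assume "(p, r, d - e, t, N) = (0, 0, 0, 1, 1)"
    then have cs: "p = 0" "r = 0" "d - e = 0" "t = 1" "N = 1" by simp_all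
    have "c = 4" using H(9) cs by simp
    have "2*(d+e) = 28" using H(10) cs by simp
    then have "d = 7" using cs(3) by presburger
    have "e = 7" using \<open>2*(d+e) = 28\<close> cs(3) by presburger
    then show ?thesis using H(1) cs \<open>c = 4\<close> \<open>d = 7\<close> \<open>e = 7\<close> by (simp add: numeral_eq_Suc)
  next
    assume False then show ?thesis by simp
  qed
next
  fix x :: "int \<times> int \<times> int list" assume "x \<in> {(7, 7, replicate 6 4 @ replicate 3 1)}"
  then show "x \<in> good_classes 3" using mem3_0 by auto
qed

lemma mem4_0: "(28::int, 28::int, replicate 5 16 @ [15] @ replicate 4 4) \<in> good_classes 4"
proof (rule mem_good[where A = 95 and B = 16])
  show "(28::int, 28::int, replicate 5 16 @ [15] @ replicate 4 4) \<in> E"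
    by (rule E_intro[where n=9]) (simp_all add: cstep_def numeral_eq_Suc)+
qed (simp_all add: numeral_eq_Suc)

lemma gc4: "good_classes 4 = {(28, 28, replicate 5 16 @ [15] @ replicate 4 4)}"
proof (rule set_eqI, rule iffI)
  fix x :: "int \<times> int \<times> int list" assume "x \<in> good_classes 4"
  from good_elim[OF _ this] obtain c N t p r z d e where H:
    "x = (d, e, replicate p (c+1) @ replicate (6-p) c @ replicate r (N+1) @ replicate (4-r) N)"
    "(d, e, (replicate p (c+1) @ replicate (6-p) c @ replicate r (N+1) @ replicate (4-r) N) @ replicate z 0) \<in> E"
    "p \<le> 5" "r < 4" "1 \<le> N" "N \<le> int 4 * N + t" "0 \<le> d - e" "d - e \<le> 1" "c = int 4 * N + t"
    "2*(d+e) = 7*int 4*N + 6*t + int p + int r + 1"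
    "Fp (int 4) (int p) (int r) t (d-e) N = 0" "Gp (int 4) (int p) (int r) t (d-e) < 0"
    by auto
  have S: "(p, r, d - e, t, N) \<in> {(5, 0, 0, -1, 4)}" by (rule solve4) (use H in simp_all)
  then have "(p, r, d - e, t, N) = (5, 0, 0, -1, 4) \<or> False" by (simp only: insert_iff empty_iff)
  then show "x \<in> {(28, 28, replicate 5 16 @ [15] @ replicate 4 4)}"
  proof (elim disjE)
    assume "(p, r, d - e, t, N) = (5, 0, 0, -1, 4)"
    then have cs: "p = 5" "r = 0" "d - e = 0" "t = - 1" "N = 4" by simp_all
    have "c = 15" using H(9) cs by simp
    have "2*(d+e) = 112" using H(10) cs by simp
    then have "d = 28" using cs(3) by presburger
    have "e = 28" using \<open>2*(d+e) = 112\<close> cs(3) by presburger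
    then show ?thesis using H(1) cs \<open>c = 15\<close> \<open>d = 28\<close> \<open>e = 28\<close> by (simp add: numeral_eq_Suc)
  next
    assume False then show ?thesis by simp
  qed
next
  fix x :: "int \<times> int \<times> int list" assume "x \<in> {(28, 28, replicate 5 16 @ [15] @ replicate 4 4)}"
  then show "x \<in> good_classes 4" using mem4_0 by auto
qed

lemma mem5_0: "(11::int, 10::int, replicate 6 6 @ replicate 5 1) \<in> good_classes 5"
proof (rule mem_good[where A = 36 and B = 5])
  show "(11::int, 10::int, replicate 6 6 @ replicate 5 1) \<in> E"
    by (rule E_intro[where n=7]) (simp_all add: cstep_def numeral_eq_Suc)+
qed (simp_all add: numeral_eq_Suc)

lemma gc5: "good_classes 5 = {(11, 10, replicate 6 6 @ replicate 5 1)}"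
proof (rule set_eqI, rule iffI)
  fix x :: "int \<times> int \<times> int list" assume "x \<in> good_classes 5"
  from good_elim[OF _ this] obtain c N t p r z d e where H:
    "x = (d, e, replicate p (c+1) @ replicate (6-p) c @ replicate r (N+1) @ replicate (5-r) N)"
    "(d, e, (replicate p (c+1) @ replicate (6-p) c @ replicate r (N+1) @ replicate (5-r) N) @ replicate z 0) \<in> E"
    "p \<le> 5" "r < 5" "1 \<le> N" "N \<le> int 5 * N + t" "0 \<le> d - e" "d - e \<le> 1" "c = int 5 * N + t"
    "2*(d+e) = 7*int 5*N + 6*t + int p + int r + 1"
    "Fp (int 5) (int p) (int r) t (d-e) N = 0" "Gp (int 5) (int p) (int r) t (d-e) < 0"
    by auto
  have S: "(p, r, d - e, t, N) \<in> {(0, 0, 1, 1, 1)}" by (rule solve5) (use H in simp_all)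
  then have "(p, r, d - e, t, N) = (0, 0, 1, 1, 1) \<or> False" by (simp only: insert_iff empty_iff)
  then show "x \<in> {(11, 10, replicate 6 6 @ replicate 5 1)}"
  proof (elim disjE)
    assume "(p, r, d - e, t, N) = (0, 0, 1, 1, 1)"
    then have cs: "p = 0" "r = 0" "d - e = 1" "t = 1" "N = 1" by simp_all
    have "c = 6" using H(9) cs by simp
    have "2*(d+e) = 42" using H(10) cs by simp
    then have "d = 11" using cs(3) by presburger
    have "e = 10" using \<open>2*(d+e) = 42\<close> cs(3) by presburger
    then show ?thesis using H(1) cs \<open>c = 6\<close> \<open>d = 11\<close> \<open>e = 10\<close> by (simp add: numeral_eq_Suc)
  next
    assume False then show ?thesis by simp
  qed
next
  fix x :: "int \<times> int \<times> int list" assume "x \<in> {(11, 10, replicate 6 6 @ replicate 5 1)}"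
  then show "x \<in> good_classes 5" using mem5_0 by auto
qed

lemma mem6_0: "(14::int, 14::int, replicate 6 8 @ [2] @ replicate 5 1) \<in> good_classes 6"
proof (rule mem_good[where A = 48 and B = 7])
  show "(14::int, 14::int, replicate 6 8 @ [2] @ replicate 5 1) \<in> E"
    by (rule E_intro[where n=7]) (simp_all add: cstep_def numeral_eq_Suc)+
qed (simp_all add: numeral_eq_Suc)

lemma mem6_1: "(84::int, 84::int, replicate 5 48 @ [47] @ replicate 6 8) \<in> good_classes 6"
proof (rule mem_good[where A = 287 and B = 48])
  show "(84::int, 84::int, replicate 5 48 @ [47] @ replicate 6 8) \<in> E"
    by (rule E_intro[where n=12]) (simp_all add: cstep_def numeral_eq_Suc)+
qed (simp_all add: numeral_eq_Suc)

lemma gc6: "good_classes 6 = {(14, 14, replicate 6 8 @ [2] @ replicate 5 1), (84, 84, replicate 5 48 @ [47] @ replicate 6 8)}"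
proof (rule set_eqI, rule iffI)
  fix x :: "int \<times> int \<times> int list" assume "x \<in> good_classes 6"
  from good_elim[OF _ this] obtain c N t p r z d e where H:
    "x = (d, e, replicate p (c+1) @ replicate (6-p) c @ replicate r (N+1) @ replicate (6-r) N)"
    "(d, e, (replicate p (c+1) @ replicate (6-p) c @ replicate r (N+1) @ replicate (6-r) N) @ replicate z 0) \<in> E"
    "p \<le> 5" "r < 6" "1 \<le> N" "N \<le> int 6 * N + t" "0 \<le> d - e" "d - e \<le> 1" "c = int 6 * N + t"
    "2*(d+e) = 7*int 6*N + 6*t + int p + int r + 1"
    "Fp (int 6) (int p) (int r) t (d-e) N = 0" "Gp (int 6) (int p) (int r) t (d-e) < 0"
    by auto
  have S: "(p, r, d - e, t, N) \<in> {(0, 1, 0, 2, 1), (5, 0, 0, -1, 8)}" by (rule solve6) (use H in simp_all)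
  then have "(p, r, d - e, t, N) = (0, 1, 0, 2, 1) \<or> (p, r, d - e, t, N) = (5, 0, 0, -1, 8) \<or> False" by (simp only: insert_iff empty_iff)
  then show "x \<in> {(14, 14, replicate 6 8 @ [2] @ replicate 5 1), (84, 84, replicate 5 48 @ [47] @ replicate 6 8)}"
  proof (elim disjE)
    assume "(p, r, d - e, t, N) = (0, 1, 0, 2, 1)"
    then have cs: "p = 0" "r = 1" "d - e = 0" "t = 2" "N = 1" by simp_all
    have "c = 8" using H(9) cs by simp
    have "2*(d+e) = 56" using H(10) cs by simp
    then have "d = 14" using cs(3) by presburger
    have "e = 14" using \<open>2*(d+e) = 56\<close> cs(3) by presburger
    then show ?thesis using H(1) cs \<open>c = 8\<close> \<open>d = 14\<close> \<open>e = 14\<close> by (simp add: numeral_eq_Suc)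
  next
    assume "(p, r, d - e, t, N) = (5, 0, 0, -1, 8)"
    then have cs: "p = 5" "r = 0" "d - e = 0" "t = - 1" "N = 8" by simp_all
    have "c = 47" using H(9) cs by simp
    have "2*(d+e) = 336" using H(10) cs by simp
    then have "d = 84" using cs(3) by presburger
    have "e = 84" using \<open>2*(d+e) = 336\<close> cs(3) by presburger
    then show ?thesis using H(1) cs \<open>c = 47\<close> \<open>d = 84\<close> \<open>e = 84\<close> by (simp add: numeral_eq_Suc)
  next
    assume False then show ?thesis by simp
  qed
next
  fix x :: "int \<times> int \<times> int list" assume "x \<in> {(14, 14, replicate 6 8 @ [2] @ replicate 5 1), (84, 84, replicate 5 48 @ [47] @ replicate 6 8)}"
  then show "x \<in> good_classes 6" using mem6_0 mem6_1 by auto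
qed

lemma mem7_0: "(28::int, 28::int, replicate 6 16 @ [3] @ replicate 6 2) \<in> good_classes 7"
proof (rule mem_good[where A = 96 and B = 15])
  show "(28::int, 28::int, replicate 6 16 @ [3] @ replicate 6 2) \<in> E"
    by (rule E_intro[where n=9]) (simp_all add: cstep_def numeral_eq_Suc)+
qed (simp_all add: numeral_eq_Suc)

lemma mem7_1: "(196::int, 196::int, replicate 5 112 @ [111] @ replicate 7 16) \<in> good_classes 7"
proof (rule mem_good[where A = 671 and B = 112])
  show "(196::int, 196::int, replicate 5 112 @ [111] @ replicate 7 16) \<in> E"
    by (rule E_intro[where n=15]) (simp_all add: cstep_def numeral_eq_Suc)+
qed (simp_all add: numeral_eq_Suc)

lemma gc7: "good_classes 7 = {(28, 28, replicate 6 16 @ [3] @ replicate 6 2), (196, 196, replicate 5 112 @ [111] @ replicate 7 16)}"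
proof (rule set_eqI, rule iffI)
  fix x :: "int \<times> int \<times> int list" assume "x \<in> good_classes 7"
  from good_elim[OF _ this] obtain c N t p r z d e where H:
    "x = (d, e, replicate p (c+1) @ replicate (6-p) c @ replicate r (N+1) @ replicate (7-r) N)"
    "(d, e, (replicate p (c+1) @ replicate (6-p) c @ replicate r (N+1) @ replicate (7-r) N) @ replicate z 0) \<in> E"
    "p \<le> 5" "r < 7" "1 \<le> N" "N \<le> int 7 * N + t" "0 \<le> d - e" "d - e \<le> 1" "c = int 7 * N + t"
    "2*(d+e) = 7*int 7*N + 6*t + int p + int r + 1"
    "Fp (int 7) (int p) (int r) t (d-e) N = 0" "Gp (int 7) (int p) (int r) t (d-e) < 0"
    by auto
  have S: "(p, r, d - e, t, N) \<in> {(0, 1, 0, 2, 2), (5, 0, 0, -1, 16)}" by (rule solve7) (use H in simp_all)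
  then have "(p, r, d - e, t, N) = (0, 1, 0, 2, 2) \<or> (p, r, d - e, t, N) = (5, 0, 0, -1, 16) \<or> False" by (simp only: insert_iff empty_iff)
  then show "x \<in> {(28, 28, replicate 6 16 @ [3] @ replicate 6 2), (196, 196, replicate 5 112 @ [111] @ replicate 7 16)}"
  proof (elim disjE)
    assume "(p, r, d - e, t, N) = (0, 1, 0, 2, 2)"
    then have cs: "p = 0" "r = 1" "d - e = 0" "t = 2" "N = 2" by simp_all
    have "c = 16" using H(9) cs by simp
    have "2*(d+e) = 112" using H(10) cs by simp
    then have "d = 28" using cs(3) by presburger
    have "e = 28" using \<open>2*(d+e) = 112\<close> cs(3) by presburger
    then show ?thesis using H(1) cs \<open>c = 16\<close> \<open>d = 28\<close> \<open>e = 28\<close> by (simp add: numeral_eq_Suc)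
  next
    assume "(p, r, d - e, t, N) = (5, 0, 0, -1, 16)"
    then have cs: "p = 5" "r = 0" "d - e = 0" "t = - 1" "N = 16" by simp_all
    have "c = 111" using H(9) cs by simp
    have "2*(d+e) = 784" using H(10) cs by simp
    then have "d = 196" using cs(3) by presburger
    have "e = 196" using \<open>2*(d+e) = 784\<close> cs(3) by presburger
    then show ?thesis using H(1) cs \<open>c = 111\<close> \<open>d = 196\<close> \<open>e = 196\<close> by (simp add: numeral_eq_Suc)
  next
    assume False then show ?thesis by simp
  qed
next
  fix x :: "int \<times> int \<times> int list" assume "x \<in> {(28, 28, replicate 6 16 @ [3] @ replicate 6 2), (196, 196, replicate 5 112 @ [111] @ replicate 7 16)}"
  then show "x \<in> good_classes 7" using mem7_0 mem7_1 by auto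
qed

lemma gc8: "good_classes 8 = {}"
proof (rule set_eqI, rule iffI)
  fix x :: "int \<times> int \<times> int list" assume "x \<in> good_classes 8"
  from good_elim[OF _ this] obtain c N t p r z d e where H:
    "x = (d, e, replicate p (c+1) @ replicate (6-p) c @ replicate r (N+1) @ replicate (8-r) N)"
    "(d, e, (replicate p (c+1) @ replicate (6-p) c @ replicate r (N+1) @ replicate (8-r) N) @ replicate z 0) \<in> E"
    "p \<le> 5" "r < 8" "1 \<le> N" "N \<le> int 8 * N + t" "0 \<le> d - e" "d - e \<le> 1" "c = int 8 * N + t"
    "2*(d+e) = 7*int 8*N + 6*t + int p + int r + 1"
    "Fp (int 8) (int p) (int r) t (d-e) N = 0" "Gp (int 8) (int p) (int r) t (d-e) < 0"
    by auto
  have S: "(p, r, d - e, t, N) \<in> {}" by (rule solve8) (use H in simp_all)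
  then show "x \<in> {}" by simp
next
  fix x :: "int \<times> int \<times> int list" assume "x \<in> {}"
  then show "x \<in> good_classes 8" by simp
qed

theorem lemma7p3:
  shows "good_classes 7 = {(28, 28, replicate 6 16 @ [3] @ replicate 6 2),
                           (196, 196, replicate 5 112 @ [111] @ replicate 7 16)}
   \<and> good_classes 6 = {(14, 14, replicate 6 8 @ [2] @ replicate 5 1),
                           (84, 84, replicate 5 48 @ [47] @ replicate 6 8)}
   \<and> good_classes 5 = {(11, 10, replicate 6 6 @ replicate 5 1)}
   \<and> good_classes 4 = {(28, 28, replicate 5 16 @ [15] @ replicate 4 4)}
   \<and> good_classes 3 = {(7, 7, replicate 6 4 @ replicate 3 1)}
   \<and> good_classes 2 = {(9, 9, replicate 6 5 @ [3, 2])}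
   \<and> good_classes 1 = {(4, 4, [3] @ replicate 6 2)}
   \<and> good_classes 8 = {}"
  using gc1 gc2 gc3 gc4 gc5 gc6 gc7 gc8 by blast

end
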